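(* Let $\lambda>\kappa>0$, $\gamma=2\kappa$, and consider the damped Euler system with repulsive Poisson force and quadratic confinement $$\partial_t\rho+\partial_x(\rho v)=0,\qquad\partial_t(\rho v)+\partial_x(\rho v^2)=-\gamma\rho v+\lambda^2\rho\int_{\mathbb{R}}\big(\operatorname{sgn}(x-y)-(x-y)\big)\,d\rho(t,y).$$ Let $\rho_0\in\mathscr P_2(\mathbb{R})$, $v_0\in L^2(\mathbb{R},\rho_0)$, and let $(\rho,v)$ be the solution corresponding to the Lagrangian (equivalently, entropy) solution. Set $\bar x_\infty=\int x\,d\rho_0(x)+\frac1{2\kappa}\int v_0\,d\rho_0$. Then, as $t\to\infty$, $(\rho(t),v(t))$ converges to $(\rho_\infty,v_\infty)$ with $$\rho_\infty(x)=\tfrac12\chi_{(-1,1)}(x-\bar x_\infty),\qquad v_\infty\equiv0,$$ and this convergence is exponentially fast in the metric $d_{\mathscr T_2}$, at a rate proportional to the damping factor $\gamma$.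
   Context: $\Omega=(0,1)$, $\mathfrak m$ Lebesgue measure; $\mathscr K=\{X\in L^2(\Omega)\text{ nondecreasing}\}$; $N_X\mathscr K=\{W\in L^2:\int_\Omega W(Y-X)\le0\ \forall Y\in\mathscr K\}$. The Lagrangian solution is the curve $X\in\mathrm{Lip}_{\mathrm{loc}}([0,\infty);\mathscr K)$ with $X(0)=X^0$ (the monotone rearrangement of $\rho_0$, $X^0(m)=\inf\{x:\rho_0((-\infty,x])>m\}$) solving $\dot X(t)+N_{X(t)}\mathscr K\ni U(t)$ for a.e. $t$, where $U(0)=V^0=v_0\circ X^0$ and $\dot U(t,m)=-2\kappa U(t,m)+\lambda^2\big(2m-1+\int_\Omega X(t,\omega)d\omega-X(t,m)\big)$; then $\rho(t)=X(t)_\#\mathfrak m$ and $v(t)$ is determined by $v(t)\circ X(t)=V(t)$, $V$ the right derivative of $X$. $\mathscr T_2=\{(\rho,v):\rho\in\mathscr P_2(\mathbb{R}),v\in L^2(\rho)\}$ with $d_{\mathscr T_2}((\rho_1,v_1),(\rho_2,v_2))^2=\|X_{\rho_1}-X_{\rho_2}\|_{L^2(\Omega)}^2+\|v_1\circ X_{\rho_1}-v_2\circ X_{\rho_2}\|_{L^2(\Omega)}^2$, $X_{\rho_i}$ the monotone rearrangements. *)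

theory Defs
  imports "HOL-Probability.Probability"
begin

text \<open>The mass space Omega = (0,1) with Lebesgue measure.\<close>
definition Om :: "real measure" where
  "Om = lebesgue_on {0<..<1}"

definition L2 :: "(real \<Rightarrow> real) set" where
  "L2 = {f. f \<in> borel_measurable Om \<and> integrable Om (\<lambda>m. (f m)^2)}"

definition L2norm :: "(real \<Rightarrow> real) \<Rightarrow> real" where
  "L2norm f = sqrt (\<integral>m. (f m)^2 \<partial>Om)"

definition L2inner :: "(real \<Rightarrow> real) \<Rightarrow> (real \<Rightarrow> real) \<Rightarrow> real" where
  "L2inner f g = (\<integral>m. f m * g m \<partial>Om)"

definition Kcone :: "(real \<Rightarrow> real) set" where
  "Kcone = {X \<in> L2. mono_on {0<..<1} X}"

definition normal_cone :: "(real \<Rightarrow> real) \<Rightarrow> (real \<Rightarrow> real) set" where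
  "normal_cone X = {W \<in> L2. \<forall>Y\<in>Kcone. L2inner W (\<lambda>m. Y m - X m) \<le> 0}"

definition L2_deriv_within ::
  "(real \<Rightarrow> real \<Rightarrow> real) \<Rightarrow> (real \<Rightarrow> real) \<Rightarrow> real \<Rightarrow> real set \<Rightarrow> bool" where
  "L2_deriv_within X D t S \<longleftrightarrow> D \<in> L2 \<and>
     ((\<lambda>s. L2norm (\<lambda>m. (X s m - X t m) / (s - t) - D m)) \<longlongrightarrow> 0) (at t within S)"

definition quantile :: "real measure \<Rightarrow> real \<Rightarrow> real" where
  "quantile \<mu> m = Inf {x. measure \<mu> {..x} > m}"

definition P2 :: "real measure \<Rightarrow> bool" where
  "P2 \<mu> \<longleftrightarrow> prob_space \<mu> \<and> sets \<mu> = sets borel \<and> integrable \<mu> (\<lambda>x. x^2)"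

definition dT2 :: "real measure \<Rightarrow> (real \<Rightarrow> real) \<Rightarrow> real measure \<Rightarrow> (real \<Rightarrow> real) \<Rightarrow> real" where
  "dT2 \<rho>1 v1 \<rho>2 v2 = sqrt ((L2norm (\<lambda>m. quantile \<rho>1 m - quantile \<rho>2 m))^2
      + (L2norm (\<lambda>m. v1 (quantile \<rho>1 m) - v2 (quantile \<rho>2 m)))^2)"

definition lagrangian_solution ::
  "real \<Rightarrow> real \<Rightarrow> real measure \<Rightarrow> (real \<Rightarrow> real) \<Rightarrow>
   (real \<Rightarrow> real \<Rightarrow> real) \<Rightarrow> (real \<Rightarrow> real \<Rightarrow> real) \<Rightarrow> bool" where
  "lagrangian_solution lam \<kappa> \<rho>0 v0 X U \<longleftrightarrow>
     (\<forall>t\<ge>0. X t \<in> Kcone) \<and>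
     (\<forall>T\<ge>0. \<exists>L. \<forall>s\<in>{0..T}. \<forall>t\<in>{0..T}. L2norm (\<lambda>m. X s m - X t m) \<le> L * \<bar>s - t\<bar>) \<and>
     (AE m in Om. X 0 m = quantile \<rho>0 m) \<and>
     (\<forall>t\<ge>0. U t \<in> L2) \<and>
     (AE m in Om. U 0 m = v0 (quantile \<rho>0 m)) \<and>
     (\<forall>t\<ge>0. L2_deriv_within U
        (\<lambda>m. - 2 * \<kappa> * U t m + lam^2 * (2 * m - 1 + (\<integral>\<omega>. X t \<omega> \<partial>Om) - X t m)) t {0..}) \<and>
     (AE t in lborel. t \<ge> 0 \<longrightarrow>
        (\<exists>D. L2_deriv_within X D t {0..} \<and> (\<lambda>m. U t m - D m) \<in> normal_cone (X t)))"

end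

theory Submission
  imports Defs
begin

lemma space_Om[simp]: "space Om = {0<..<1}"
  by (simp add: Om_def)

lemma sets_Om: "sets Om = sets (lebesgue_on {0<..<1})"
  by (simp add: Om_def)

lemma emeasure_Om_space: "emeasure Om {0<..<1} = 1"
  unfolding Om_def by (simp add: emeasure_restrict_space)

lemma prob_space_Om: "prob_space Om"
  by (rule prob_spaceI) (simp add: emeasure_Om_space)

interpretation Om: prob_space Om by (rule prob_space_Om)

lemma L2_meas: "f \<in> L2 \<Longrightarrow> f \<in> borel_measurable Om" by (simp add: L2_def)
lemma L2_sq: "f \<in> L2 \<Longrightarrow> integrable Om (\<lambda>m. (f m)^2)" by (simp add: L2_def)

lemma L2_prod_int:
  assumes "f \<in> L2" "g \<in> L2" shows "integrable Om (\<lambda>m. f m * g m)"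
proof (rule Bochner_Integration.integrable_bound)
  show "integrable Om (\<lambda>m. (f m)^2 + (g m)^2)" using assms by (auto simp: L2_def)
  show "(\<lambda>m. f m * g m) \<in> borel_measurable Om" using assms by (auto simp: L2_def)
  show "AE m in Om. norm (f m * g m) \<le> norm ((f m)^2 + (g m)^2)"
  proof (rule AE_I2)
    fix m
    have "0 \<le> (\<bar>f m\<bar> - \<bar>g m\<bar>)^2" by simp
    also have "\<dots> = (f m)^2 + (g m)^2 - 2 * \<bar>f m * g m\<bar>"
      by (simp add: power2_diff abs_mult)
    finally have "\<bar>f m * g m\<bar> \<le> (f m)^2 + (g m)^2" by simp
    then show "norm (f m * g m) \<le> norm ((f m)^2 + (g m)^2)" by simp
  qed
qed

lemma L2_const[simp, intro]: "(\<lambda>m. c) \<in> L2"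
  by (simp add: L2_def)

lemma L2_id[simp, intro]: "(\<lambda>m. m) \<in> L2"
proof -
  have "integrable Om (\<lambda>m::real. m^2)"
  proof (rule Bochner_Integration.integrable_bound)
    show "integrable Om (\<lambda>m. 1::real)" by simp
    show "(\<lambda>m::real. m^2) \<in> borel_measurable Om" unfolding Om_def
      by (rule continuous_imp_measurable_on_sets_lebesgue) (auto intro!: continuous_on_power continuous_on_id)
    show "AE m in Om. norm (m^2) \<le> norm (1::real)"
      by (rule AE_I2) (simp add: abs_square_le_1)
  qed
  moreover have "(\<lambda>m::real. m) \<in> borel_measurable Om" unfolding Om_def
      by (rule continuous_imp_measurable_on_sets_lebesgue) (auto intro!: continuous_on_power continuous_on_id)
  ultimately show ?thesis by (simp add: L2_def)
qed

lemma L2_add[simp, intro]: "f \<in> L2 \<Longrightarrow> g \<in> L2 \<Longrightarrow> (\<lambda>m. f m + g m) \<in> L2"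
proof -
  assume a: "f \<in> L2" "g \<in> L2"
  have "integrable Om (\<lambda>m. (f m)^2 + (g m)^2 + 2 * (f m * g m))"
    using a L2_prod_int[OF a] by (auto simp: L2_def)
  then show ?thesis using a by (simp add: L2_def power2_sum algebra_simps borel_measurable_add)
qed

lemma L2_cmult[simp, intro]: "f \<in> L2 \<Longrightarrow> (\<lambda>m. c * f m) \<in> L2"
  by (simp add: L2_def power_mult_distrib borel_measurable_times)

lemma L2_uminus[simp, intro]: "f \<in> L2 \<Longrightarrow> (\<lambda>m. - f m) \<in> L2"
  by (simp add: L2_def)

lemma L2_diff[simp, intro]: "f \<in> L2 \<Longrightarrow> g \<in> L2 \<Longrightarrow> (\<lambda>m. f m - g m) \<in> L2"
  using L2_add[of f "\<lambda>m. - g m"] by simp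

lemma L2_div[simp, intro]: "f \<in> L2 \<Longrightarrow> (\<lambda>m. f m / c) \<in> L2"
  using L2_cmult[of f "1/c"] by simp


lemma L2_int: "f \<in> L2 \<Longrightarrow> integrable Om f"
  using L2_prod_int[of f "\<lambda>_. 1"] by simp

definition ip where "ip = L2inner"
definition nrm where "nrm = L2norm"

lemma ip_def2: "ip f g = (\<integral>m. f m * g m \<partial>Om)" by (simp add: ip_def L2inner_def)
lemma nrm_def2: "nrm f = sqrt (ip f f)" by (simp add: nrm_def L2norm_def ip_def2 power2_eq_square)

lemma ip_sym: "ip f g = ip g f" by (simp add: ip_def2 mult.commute)

lemma ip_add_left: "f \<in> L2 \<Longrightarrow> g \<in> L2 \<Longrightarrow> h \<in> L2 \<Longrightarrow> ip (\<lambda>m. f m + g m) h = ip f h + ip g h"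
  by (simp add: ip_def2 distrib_right L2_prod_int)
lemma ip_diff_left: "f \<in> L2 \<Longrightarrow> g \<in> L2 \<Longrightarrow> h \<in> L2 \<Longrightarrow> ip (\<lambda>m. f m - g m) h = ip f h - ip g h"
  by (simp add: ip_def2 left_diff_distrib L2_prod_int)
lemma ip_cmult_left: "ip (\<lambda>m. c * f m) h = c * ip f h"
  by (simp add: ip_def2 mult.assoc)
lemma ip_uminus_left: "ip (\<lambda>m. - f m) h = - ip f h"
  by (simp add: ip_def2)
lemma ip_div_left: "ip (\<lambda>m. f m / c) h = ip f h / c"
  by (simp add: ip_def2)
lemma ip_add_right: "f \<in> L2 \<Longrightarrow> g \<in> L2 \<Longrightarrow> h \<in> L2 \<Longrightarrow> ip h (\<lambda>m. f m + g m) = ip h f + ip h g"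
  by (simp add: ip_def2 distrib_left L2_prod_int)
lemma ip_diff_right: "f \<in> L2 \<Longrightarrow> g \<in> L2 \<Longrightarrow> h \<in> L2 \<Longrightarrow> ip h (\<lambda>m. f m - g m) = ip h f - ip h g"
  by (simp add: ip_def2 right_diff_distrib L2_prod_int)
lemma ip_cmult_right: "ip h (\<lambda>m. c * f m) = c * ip h f"
  by (simp add: ip_def2 ac_simps)
lemma ip_uminus_right: "ip h (\<lambda>m. - f m) = - ip h f"
  by (simp add: ip_def2)
lemma ip_div_right: "ip h (\<lambda>m. f m / c) = ip h f / c"
  by (simp add: ip_def2)
lemma ip_zero_left[simp]: "ip (\<lambda>m. 0) h = 0" by (simp add: ip_def2)
lemma ip_zero_right[simp]: "ip h (\<lambda>m. 0) = 0" by (simp add: ip_def2)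

lemmas ip_lin = ip_add_left ip_diff_left ip_cmult_left ip_uminus_left ip_div_left
  ip_add_right ip_diff_right ip_cmult_right ip_uminus_right ip_div_right

lemma ip_self_nonneg: "ip f f \<ge> 0"
  using integral_nonneg_AE[of "\<lambda>m. f m * f m" Om] by (simp add: ip_def2)

lemma nrm_nonneg: "nrm f \<ge> 0" by (simp add: nrm_def2 ip_self_nonneg)
lemma nrm_sq: "(nrm f)^2 = ip f f" by (simp add: nrm_def2 ip_self_nonneg)

lemma discr_lemma:
  fixes a b c :: real
  assumes "\<And>s. 0 \<le> a + 2 * b * s + c * s^2" "0 \<le> a" "0 \<le> c"
  shows "b^2 \<le> a * c"
proof (cases "c = 0")
  case True
  have "b = 0"
  proof (rule ccontr)
    assume "b \<noteq> 0"
    have "0 \<le> a + 2 * b * (- (a + 1) / (2 * b))" using assms(1)[of "- (a + 1) / (2 * b)"] True by simp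
    also have "\<dots> = -1" using \<open>b \<noteq> 0\<close> by (simp add: field_simps)
    finally show False by simp
  qed
  then show ?thesis using assms by simp
next
  case False
  then have cpos: "c > 0" using assms by simp
  have "0 \<le> a + 2 * b * (- b / c) + c * (- b / c)^2" by (rule assms(1))
  also have "\<dots> = a - b^2 / c" using cpos by (simp add: field_simps power2_eq_square)
  finally have "b^2 / c \<le> a" by simp
  then show ?thesis using cpos by (simp add: field_simps mult.commute)
qed

lemma cauchy_schwarz:
  assumes "f \<in> L2" "g \<in> L2"
  shows "\<bar>ip f g\<bar> \<le> nrm f * nrm g"
proof -
  have "\<And>s. 0 \<le> ip f f + 2 * ip f g * s + ip g g * s^2"
  proof -
    fix s
    have "0 \<le> ip (\<lambda>m. f m + s * g m) (\<lambda>m. f m + s * g m)" by (rule ip_self_nonneg)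
    also have "\<dots> = ip f f + 2 * ip f g * s + ip g g * s^2"
      using assms by (simp add: ip_lin power2_eq_square ip_sym[of g f] algebra_simps)
    finally show "0 \<le> ip f f + 2 * ip f g * s + ip g g * s^2" .
  qed
  then have "(ip f g)^2 \<le> ip f f * ip g g"
    by (rule discr_lemma) (auto simp: ip_self_nonneg)
  then have "(ip f g)^2 \<le> (nrm f * nrm g)^2" by (simp add: power_mult_distrib nrm_sq)
  then show ?thesis
    using power2_le_imp_le[of "\<bar>ip f g\<bar>" "nrm f * nrm g"] by (simp add: nrm_nonneg)
qed

lemma nrm_triangle:
  assumes "f \<in> L2" "g \<in> L2"
  shows "nrm (\<lambda>m. f m + g m) \<le> nrm f + nrm g"
proof -
  have "(nrm (\<lambda>m. f m + g m))^2 = ip f f + 2 * ip f g + ip g g"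
    using assms by (simp add: nrm_sq ip_lin ip_sym[of g f])
  also have "\<dots> \<le> (nrm f)^2 + 2 * (nrm f * nrm g) + (nrm g)^2"
    using cauchy_schwarz[OF assms] by (simp add: nrm_sq)
  also have "\<dots> = (nrm f + nrm g)^2" by (simp add: power2_sum)
  finally show ?thesis using nrm_nonneg
    by (meson add_nonneg_nonneg power2_le_imp_le)
qed

lemma nrm_cmult: "nrm (\<lambda>m. c * f m) = \<bar>c\<bar> * nrm f"
  by (simp add: nrm_def2 ip_cmult_left ip_cmult_right real_sqrt_mult mult.assoc[symmetric])

lemma nrm_diff_sym: "nrm (\<lambda>m. f m - g m) = nrm (\<lambda>m. g m - f m)"
proof -
  have "\<And>m. (g m - f m) * (g m - f m) = (f m - g m) * (f m - g m)" by (simp add: right_diff_distrib left_diff_distrib)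
  then show ?thesis by (simp add: nrm_def2 ip_def2)
qed

lemma ip_one_one: "ip (\<lambda>m. 1) (\<lambda>m. 1) = 1"
  using Om.prob_space by (simp add: ip_def2)

lemma nrm_one: "nrm (\<lambda>m. 1) = 1" by (simp add: nrm_def2 ip_one_one)

lemma int_ip: "(\<integral>m. f m \<partial>Om) = ip f (\<lambda>m. 1)" by (simp add: ip_def2)

lemma ip_cong_AE: "f \<in> L2 \<Longrightarrow> f' \<in> L2 \<Longrightarrow> g \<in> L2 \<Longrightarrow> g' \<in> L2 \<Longrightarrow>
  AE m in Om. f m = f' m \<Longrightarrow> AE m in Om. g m = g' m \<Longrightarrow> ip f g = ip f' g'"
  unfolding ip_def2 by (rule integral_cong_AE) (auto simp: L2_def borel_measurable_times)

lemma nrm_AE_le: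
  assumes "f \<in> L2" "AE m in Om. g m = f m"
  shows "nrm g \<le> nrm f"
proof (cases "integrable Om (\<lambda>m. g m * g m)")
  case True
  then have "(\<lambda>m. g m * g m) \<in> borel_measurable Om" by auto
  moreover have "(\<lambda>m. f m * f m) \<in> borel_measurable Om" using assms by (auto simp: L2_def)
  ultimately have "ip g g = ip f f" unfolding ip_def2
    by (intro integral_cong_AE) (use assms(2) in auto)
  then show ?thesis by (simp add: nrm_def2)
next
  case False
  then have "ip g g = 0" by (simp add: ip_def2 not_integrable_integral_eq)
  then show ?thesis by (simp add: nrm_def2 ip_self_nonneg)
qed


definition plip :: "real \<Rightarrow> real \<Rightarrow> (real \<Rightarrow> real) \<Rightarrow> real \<Rightarrow> bool" where
  "plip a b f B \<longleftrightarrow> (\<forall>x\<in>{a..b}. \<exists>d>0. \<forall>y\<in>{a..b}. \<bar>y - x\<bar> < d \<longrightarrow> \<bar>f y - f x\<bar> \<le> B * \<bar>y - x\<bar>)"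

lemma plip_cont:
  assumes "plip a b f B"
  shows "continuous_on {a..b} f"
  unfolding continuous_on_def
proof
  fix x assume x: "x \<in> {a..b}"
  obtain d where d: "d > 0" "\<forall>y\<in>{a..b}. \<bar>y - x\<bar> < d \<longrightarrow> \<bar>f y - f x\<bar> \<le> B * \<bar>y - x\<bar>"
    using assms x unfolding plip_def by blast
  have "((\<lambda>y. f y - f x) \<longlongrightarrow> 0) (at x within {a..b})"
  proof (rule Lim_null_comparison)
    show "\<forall>\<^sub>F y in at x within {a..b}. norm (f y - f x) \<le> B * \<bar>y - x\<bar>"
      unfolding eventually_at using d by (auto simp: dist_real_def)
    have "((\<lambda>y. B * \<bar>y - x\<bar>) \<longlongrightarrow> B * \<bar>x - x\<bar>) (at x within {a..b})"
      by (intro tendsto_intros)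
    then show "((\<lambda>y. B * \<bar>y - x\<bar>) \<longlongrightarrow> 0) (at x within {a..b})" by simp
  qed
  then show "(f \<longlongrightarrow> f x) (at x within {a..b})"
    by (rule Lim_null[THEN iffD2])
qed

lemma mono_ae:
  fixes f :: "real \<Rightarrow> real"
  assumes ab: "a \<le> b"
  and lip: "plip a b f B"
  and negN: "negligible N"
  and der: "\<And>t. t \<in> {a<..<b} \<Longrightarrow> t \<notin> N \<Longrightarrow>
      \<exists>f'. (f has_real_derivative f') (at t within {a..b}) \<and> f' \<le> 0"
  shows "f b \<le> f a"
proof (rule ccontr)
  assume "\<not> f b \<le> f a"
  then have fab: "f a < f b" by simp
  then have ab': "a < b" using ab by (cases "a = b") auto
  define \<eta> where "\<eta> = (f b - f a) / (2 * (b - a))"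
  have eta: "\<eta> > 0" using fab ab' by (simp add: \<eta>_def)
  define g where "g t = f t - \<eta> * t" for t
  have e2: "2 * (\<eta> * (b - a)) = f b - f a" using ab' by (simp add: \<eta>_def field_simps)
  have gab: "g a < g b"
  proof -
    have "g b - g a = (f b - f a) - \<eta> * (b - a)" by (simp add: g_def algebra_simps)
    then show ?thesis using fab e2 by linarith
  qed
  define B' where "B' = \<bar>B\<bar> + \<eta> + 1"
  have B'pos: "B' > 0" using eta by (simp add: B'_def)
  have glip: "plip a b g B'"
    unfolding plip_def
  proof
    fix x assume x: "x \<in> {a..b}"
    obtain d where d: "d > 0" "\<forall>y\<in>{a..b}. \<bar>y - x\<bar> < d \<longrightarrow> \<bar>f y - f x\<bar> \<le> B * \<bar>y - x\<bar>"
      using lip x unfolding plip_def by blast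
    have "\<forall>y\<in>{a..b}. \<bar>y - x\<bar> < d \<longrightarrow> \<bar>g y - g x\<bar> \<le> B' * \<bar>y - x\<bar>"
    proof (intro ballI impI)
      fix y assume y: "y \<in> {a..b}" "\<bar>y - x\<bar> < d"
      have "g y - g x = (f y - f x) - \<eta> * (y - x)" by (simp add: g_def algebra_simps)
      then have "\<bar>g y - g x\<bar> \<le> \<bar>f y - f x\<bar> + \<bar>\<eta> * (y - x)\<bar>"
        by (metis abs_triangle_ineq4)
      also have "\<bar>\<eta> * (y - x)\<bar> = \<eta> * \<bar>y - x\<bar>" using eta by (simp add: abs_mult)
      finally have "\<bar>g y - g x\<bar> \<le> \<bar>f y - f x\<bar> + \<eta> * \<bar>y - x\<bar>" .
      also have "\<dots> \<le> B * \<bar>y - x\<bar> + \<eta> * \<bar>y - x\<bar>" using d y by simp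
      also have "\<dots> \<le> B' * \<bar>y - x\<bar>"
      proof -
        have "B * \<bar>y - x\<bar> \<le> \<bar>B\<bar> * \<bar>y - x\<bar>" by (simp add: mult_right_mono)
        then show ?thesis by (simp add: B'_def distrib_right)
      qed
      finally show "\<bar>g y - g x\<bar> \<le> B' * \<bar>y - x\<bar>" .
    qed
    then show "\<exists>d>0. \<forall>y\<in>{a..b}. \<bar>y - x\<bar> < d \<longrightarrow> \<bar>g y - g x\<bar> \<le> B' * \<bar>y - x\<bar>" using d by blast
  qed
  have gcont: "continuous_on {a..b} g" by (rule plip_cont[OF glip])
  define S where "S = ({a..b} \<inter> N) \<union> {a, b}"
  have negS: "negligible S" unfolding S_def
  proof (rule negligible_Un)
    show "negligible ({a..b} \<inter> N)" by (rule negligible_subset[OF negN]) auto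
    show "negligible {a, b}" by (rule negligible_finite) simp
  qed
  have bS: "bounded S" unfolding S_def
    by (rule bounded_subset[of "{a..b}"]) (auto simp: ab)
  have "negligible (g ` S)"
  proof (rule locally_Lipschitz_negl_bounded[OF _ B'pos bS negS])
    show "DIM(real) \<le> DIM(real)" by simp
    fix x assume "x \<in> S"
    then have x: "x \<in> {a..b}" unfolding S_def using ab by auto
    obtain d where d: "d > 0" "\<forall>y\<in>{a..b}. \<bar>y - x\<bar> < d \<longrightarrow> \<bar>g y - g x\<bar> \<le> B' * \<bar>y - x\<bar>"
      using glip x unfolding plip_def by blast
    show "\<exists>T. open T \<and> x \<in> T \<and> (\<forall>y\<in>S \<inter> T. norm (g y - g x) \<le> B' * norm (y - x))"
    proof (intro exI conjI)
      show "open (ball x d)" by simp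
      show "x \<in> ball x d" using d by simp
      show "\<forall>y\<in>S \<inter> ball x d. norm (g y - g x) \<le> B' * norm (y - x)"
        using d(2) unfolding S_def using ab by (auto simp: dist_real_def abs_minus_commute)
    qed
  qed
  moreover have "\<not> negligible {g a<..<g b}"
    using open_not_negligible[of "{g a<..<g b}"] gab by simp
  ultimately obtain y where y: "y \<in> {g a<..<g b}" "y \<notin> g ` S"
    using negligible_subset by blast
  define T where "T = {t \<in> {a..b}. g t = y}"
  have Tclosed: "closed T" unfolding T_def
    by (rule continuous_closed_preimage_constant[OF gcont]) simp
  have Tne: "T \<noteq> {}"
    using IVT'[of g a y b] y ab gcont unfolding T_def by fastforce
  have Tbdd: "bdd_above T" unfolding T_def by (auto intro: bdd_aboveI[of _ b])
  define \<tau> where "\<tau> = Sup T"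
  have tauT: "\<tau> \<in> T" unfolding \<tau>_def by (rule closed_contains_Sup[OF Tne Tbdd Tclosed])
  have tau_max: "\<And>r. r \<in> T \<Longrightarrow> r \<le> \<tau>" unfolding \<tau>_def by (rule cSup_upper[OF _ Tbdd])
  have tauab: "\<tau> \<in> {a..b}" "g \<tau> = y" using tauT unfolding T_def by auto
  have "\<tau> \<notin> S" using y(2) tauab by (metis imageI)
  then have tau_in: "\<tau> \<in> {a<..<b}" "\<tau> \<notin> N" unfolding S_def using tauab by auto
  obtain f' where f': "(f has_real_derivative f') (at \<tau> within {a..b})" "f' \<le> 0"
    using der[OF tau_in] by blast
  have gder: "(g has_real_derivative (f' - \<eta>)) (at \<tau> within {a..b})"
    unfolding g_def using f'(1) by (auto intro!: derivative_eq_intros)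
  obtain d where d: "d > 0" "\<forall>h>0. \<tau> + h \<in> {a..b} \<longrightarrow> h < d \<longrightarrow> g \<tau> > g (\<tau> + h)"
    using has_real_derivative_neg_dec_right[OF gder] f'(2) eta by auto
  define h where "h = min (d / 2) (b - \<tau>)"
  have hpos: "h > 0" using d tau_in by (simp add: h_def)
  have hin: "\<tau> + h \<in> {a..b}" using tau_in hpos by (auto simp: h_def)
  have "g (\<tau> + h) < y" using d(2) hpos hin tauab by (auto simp: h_def)
  then obtain r where r: "\<tau> + h \<le> r" "r \<le> b" "g r = y"
    using IVT'[of g "\<tau> + h" y b] y hin continuous_on_subset[OF gcont, of "{\<tau>+h..b}"] by auto
  then have "r \<in> T" unfolding T_def using hin by auto
  then have "r \<le> \<tau>" by (rule tau_max)
  then show False using r hpos by simp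
qed


lemma L2_deriv_D: "L2_deriv_within A A' t S \<Longrightarrow> A' \<in> L2"
  by (simp add: L2_deriv_within_def)

lemma L2_deriv_lim: "L2_deriv_within A A' t S \<Longrightarrow>
  ((\<lambda>s. nrm (\<lambda>m. (A s m - A t m) / (s - t) - A' m)) \<longlongrightarrow> 0) (at t within S)"
  by (simp add: L2_deriv_within_def nrm_def)

lemma nrm_diff_le: "f \<in> L2 \<Longrightarrow> g \<in> L2 \<Longrightarrow> nrm f \<le> nrm (\<lambda>m. f m - g m) + nrm g"
  using nrm_triangle[of "\<lambda>m. f m - g m" g] by simp

lemma quot_nrm:
  assumes "s \<noteq> t"
  shows "nrm (\<lambda>m. A s m - A t m) = \<bar>s - t\<bar> * nrm (\<lambda>m. (A s m - A t m) / (s - t))"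
proof -
  have "(\<lambda>m. A s m - A t m) = (\<lambda>m. (s - t) * ((A s m - A t m) / (s - t)))"
    using assms by auto
  then show ?thesis using nrm_cmult[of "s - t" "\<lambda>m. (A s m - A t m) / (s - t)"] by simp
qed

lemma deriv_diff_bound:
  assumes L2: "\<And>s. s \<in> S \<Longrightarrow> A s \<in> L2" "A t \<in> L2" and D: "A' \<in> L2" and s: "s \<in> S" "s \<noteq> t"
  shows "nrm (\<lambda>m. A s m - A t m) \<le> \<bar>s - t\<bar> * (nrm (\<lambda>m. (A s m - A t m) / (s - t) - A' m) + nrm A')"
proof -
  have "nrm (\<lambda>m. (A s m - A t m) / (s - t)) \<le> nrm (\<lambda>m. (A s m - A t m) / (s - t) - A' m) + nrm A'"
    by (rule nrm_diff_le) (use L2 D s in auto)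
  then show ?thesis using quot_nrm[OF s(2), of A] by (simp add: mult_left_mono)
qed

lemma deriv_cont:
  assumes d: "L2_deriv_within A A' t S"
    and L2: "\<And>s. s \<in> S \<Longrightarrow> A s \<in> L2" "A t \<in> L2"
  shows "((\<lambda>s. nrm (\<lambda>m. A s m - A t m)) \<longlongrightarrow> 0) (at t within S)"
proof (rule Lim_null_comparison)
  have D: "A' \<in> L2" using d by (rule L2_deriv_D)
  show "\<forall>\<^sub>F s in at t within S. norm (nrm (\<lambda>m. A s m - A t m)) \<le>
      \<bar>s - t\<bar> * (nrm (\<lambda>m. (A s m - A t m) / (s - t) - A' m) + nrm A')"
    unfolding eventually_at_filter
    by (rule always_eventually) (auto simp: nrm_nonneg intro!: deriv_diff_bound[where S=S and A=A and t=t and A'=A', OF L2 D])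
  have "((\<lambda>s. \<bar>s - t\<bar> * (nrm (\<lambda>m. (A s m - A t m) / (s - t) - A' m) + nrm A')) \<longlongrightarrow>
      \<bar>t - t\<bar> * (0 + nrm A')) (at t within S)"
    by (intro tendsto_intros L2_deriv_lim[OF d])
  then show "((\<lambda>s. \<bar>s - t\<bar> * (nrm (\<lambda>m. (A s m - A t m) / (s - t) - A' m) + nrm A')) \<longlongrightarrow> 0) (at t within S)"
    by simp
qed

lemma ip_deriv:
  assumes dA: "L2_deriv_within A A' t S" and dB: "L2_deriv_within B B' t S"
    and LA: "\<And>s. s \<in> S \<Longrightarrow> A s \<in> L2" "A t \<in> L2"
    and LB: "\<And>s. s \<in> S \<Longrightarrow> B s \<in> L2" "B t \<in> L2"
  shows "((\<lambda>s. ip (A s) (B s)) has_real_derivative (ip A' (B t) + ip (A t) B')) (at t within S)"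
proof -
  have DA: "A' \<in> L2" using dA by (rule L2_deriv_D)
  have DB: "B' \<in> L2" using dB by (rule L2_deriv_D)
  define eA where "eA s = nrm (\<lambda>m. (A s m - A t m) / (s - t) - A' m)" for s
  define eB where "eB s = nrm (\<lambda>m. (B s m - B t m) / (s - t) - B' m)" for s
  define dBn where "dBn s = nrm (\<lambda>m. B s m - B t m)" for s
  let ?D = "ip A' (B t) + ip (A t) B'"
  have key: "\<bar>(ip (A s) (B s) - ip (A t) (B t)) / (s - t) - ?D\<bar>
      \<le> eA s * (nrm (B t) + dBn s) + nrm A' * dBn s + nrm (A t) * eB s"
    if s: "s \<in> S" "s \<noteq> t" for s
  proof -
    have AsL: "A s \<in> L2" "B s \<in> L2" using s LA LB by auto
    have eq: "(ip (A s) (B s) - ip (A t) (B t)) / (s - t) - ?D =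
      ip (\<lambda>m. (A s m - A t m) / (s - t) - A' m) (B s) + ip A' (\<lambda>m. B s m - B t m)
      + ip (A t) (\<lambda>m. (B s m - B t m) / (s - t) - B' m)"
      using AsL LA(2) LB(2) DA DB s(2)
      by (simp add: ip_lin ip_sym[of A'] diff_divide_distrib)
    have b1: "\<bar>ip (\<lambda>m. (A s m - A t m) / (s - t) - A' m) (B s)\<bar> \<le> eA s * nrm (B s)"
      unfolding eA_def by (rule cauchy_schwarz) (use AsL LA(2) DA in auto)
    have b1': "eA s * nrm (B s) \<le> eA s * (nrm (B t) + dBn s)"
    proof (rule mult_left_mono)
      show "nrm (B s) \<le> nrm (B t) + dBn s" unfolding dBn_def
        using nrm_diff_le[of "B s" "B t"] AsL LB(2) by simp
      show "0 \<le> eA s" by (simp add: eA_def nrm_nonneg)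
    qed
    have b2: "\<bar>ip A' (\<lambda>m. B s m - B t m)\<bar> \<le> nrm A' * dBn s"
      unfolding dBn_def by (rule cauchy_schwarz) (use AsL LB(2) DA in auto)
    have b3: "\<bar>ip (A t) (\<lambda>m. (B s m - B t m) / (s - t) - B' m)\<bar> \<le> nrm (A t) * eB s"
      unfolding eB_def by (rule cauchy_schwarz) (use AsL LB(2) LA(2) DB in auto)
    show ?thesis unfolding eq using b1 b1' b2 b3 by linarith
  qed
  have lim: "((\<lambda>s. eA s * (nrm (B t) + dBn s) + nrm A' * dBn s + nrm (A t) * eB s) \<longlongrightarrow>
      0 * (nrm (B t) + 0) + nrm A' * 0 + nrm (A t) * 0) (at t within S)"
    unfolding eA_def eB_def dBn_def
    by (intro tendsto_intros L2_deriv_lim[OF dA] L2_deriv_lim[OF dB] deriv_cont[OF dB LB])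
  have "((\<lambda>s. (ip (A s) (B s) - ip (A t) (B t)) / (s - t) - ?D) \<longlongrightarrow> 0) (at t within S)"
  proof (rule Lim_null_comparison)
    show "\<forall>\<^sub>F s in at t within S. norm ((ip (A s) (B s) - ip (A t) (B t)) / (s - t) - ?D)
        \<le> eA s * (nrm (B t) + dBn s) + nrm A' * dBn s + nrm (A t) * eB s"
      unfolding eventually_at_filter by (rule always_eventually) (auto intro!: key)
    show "((\<lambda>s. eA s * (nrm (B t) + dBn s) + nrm A' * dBn s + nrm (A t) * eB s) \<longlongrightarrow> 0) (at t within S)"
      using lim by simp
  qed
  then show ?thesis unfolding has_field_derivative_iff
    by (rule Lim_null[THEN iffD2])
qed

lemma const_deriv: "L2_deriv_within (\<lambda>s. C) (\<lambda>m. 0) t S"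
  by (simp add: L2_deriv_within_def L2norm_def)


lemma Kcone_I: "f \<in> L2 \<Longrightarrow> mono_on {0<..<1} f \<Longrightarrow> f \<in> Kcone"
  by (simp add: Kcone_def)

lemma Kcone_L2: "f \<in> Kcone \<Longrightarrow> f \<in> L2" by (simp add: Kcone_def)

lemma Kcone_mono: "f \<in> Kcone \<Longrightarrow> mono_on {0<..<1} f" by (simp add: Kcone_def)

lemma Z_Kcone: "(\<lambda>m. 2 * m - 1) \<in> Kcone"
  by (rule Kcone_I) (auto simp: mono_on_def)

lemma nc_ineq: "W \<in> normal_cone X \<Longrightarrow> Y \<in> Kcone \<Longrightarrow> X \<in> L2 \<Longrightarrow> ip W Y \<le> ip W X"
  unfolding normal_cone_def using ip_diff_right[of Y X W] Kcone_L2[of Y]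
  by (auto simp: ip_def)

lemma nc_L2: "W \<in> normal_cone X \<Longrightarrow> W \<in> L2" by (simp add: normal_cone_def)

lemma nc_props:
  assumes X: "X \<in> Kcone" and W: "W \<in> normal_cone X"
  shows "ip W X = 0" "ip W (\<lambda>m. 1) = 0" "ip W (\<lambda>m. 2 * m - 1) \<le> 0"
proof -
  have XL: "X \<in> L2" using X by (rule Kcone_L2)
  have WL: "W \<in> L2" using W by (rule nc_L2)
  have mX: "mono_on {0<..<1} X" using X by (rule Kcone_mono)
  have "(\<lambda>m. 2 * X m) \<in> Kcone" using XL mX by (intro Kcone_I) (auto simp: mono_on_def)
  from nc_ineq[OF W this XL] have a: "ip W X \<le> 0" by (simp add: ip_cmult_right)
  have "(\<lambda>m. 0) \<in> Kcone" by (intro Kcone_I) (auto simp: mono_on_def)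
  from nc_ineq[OF W this XL] have b: "0 \<le> ip W X" by simp
  show c: "ip W X = 0" using a b by simp
  have "(\<lambda>m. X m + 1) \<in> Kcone" using XL mX by (intro Kcone_I) (auto simp: mono_on_def)
  from nc_ineq[OF W this XL] have d: "ip W (\<lambda>m. 1) \<le> 0" using XL WL by (simp add: ip_add_right)
  have "(\<lambda>m. X m - 1) \<in> Kcone" using XL mX by (intro Kcone_I) (auto simp: mono_on_def)
  from nc_ineq[OF W this XL] have e: "0 \<le> ip W (\<lambda>m. 1)" using XL WL by (simp add: ip_diff_right)
  show "ip W (\<lambda>m. 1) = 0" using d e by simp
  from nc_ineq[OF W Z_Kcone XL] c show "ip W (\<lambda>m. 2 * m - 1) \<le> 0" by simp
qed

lemma tangent:
  assumes t: "t > 0" and dX: "L2_deriv_within X D t {0..}"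
    and K: "\<And>s. s \<ge> 0 \<Longrightarrow> X s \<in> Kcone" and W: "W \<in> normal_cone (X t)"
  shows "ip W D = 0"
proof -
  have WL: "W \<in> L2" using W by (rule nc_L2)
  have DL: "D \<in> L2" using dX by (rule L2_deriv_D)
  have XL: "\<And>s. s \<ge> 0 \<Longrightarrow> X s \<in> L2" using K Kcone_L2 by blast
  define Q where "Q s = (\<lambda>m. (X s m - X t m) / (s - t))" for s
  have QL: "s \<ge> 0 \<Longrightarrow> Q s \<in> L2" for s using XL[of s] XL[of t] t by (auto simp: Q_def)
  have lim: "((\<lambda>s. ip W (Q s)) \<longlongrightarrow> ip W D) (at t within {0..})"
  proof -
    have "((\<lambda>s. ip W (Q s) - ip W D) \<longlongrightarrow> 0) (at t within {0..})"
    proof (rule Lim_null_comparison)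
      show "\<forall>\<^sub>F s in at t within {0..}. norm (ip W (Q s) - ip W D) \<le>
          nrm W * nrm (\<lambda>m. (X s m - X t m) / (s - t) - D m)"
        unfolding eventually_at_filter
      proof (rule always_eventually, intro allI impI)
        fix s assume "s \<noteq> t" "s \<in> {0..}"
        then have "ip W (Q s) - ip W D = ip W (\<lambda>m. Q s m - D m)"
          using QL[of s] DL WL by (simp add: ip_diff_right)
        also have "\<bar>\<dots>\<bar> \<le> nrm W * nrm (\<lambda>m. Q s m - D m)"
          by (rule cauchy_schwarz) (use QL[of s] DL WL \<open>s \<in> {0..}\<close> in auto)
        finally show "norm (ip W (Q s) - ip W D) \<le> nrm W * nrm (\<lambda>m. (X s m - X t m) / (s - t) - D m)"
          by (simp add: Q_def)
      qed
      have "((\<lambda>s. nrm W * nrm (\<lambda>m. (X s m - X t m) / (s - t) - D m)) \<longlongrightarrow> nrm W * 0) (at t within {0..})"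
        by (intro tendsto_intros L2_deriv_lim[OF dX])
      then show "((\<lambda>s. nrm W * nrm (\<lambda>m. (X s m - X t m) / (s - t) - D m)) \<longlongrightarrow> 0) (at t within {0..})"
        by simp
    qed
    then show ?thesis by (rule Lim_null[THEN iffD2])
  qed
  have sgn: "ip W (Q s) = ip W (\<lambda>m. X s m - X t m) / (s - t)" for s
    by (simp add: Q_def ip_div_right)
  have nc: "ip W (\<lambda>m. X s m - X t m) \<le> 0" if "s \<ge> 0" for s
    using nc_ineq[OF W K[OF that] XL[of t]] XL[of s] XL[of t] WL t that
    by (simp add: ip_diff_right)
  have le: "ip W D \<le> 0"
  proof (rule tendsto_upperbound)
    show "((\<lambda>s. ip W (Q s)) \<longlongrightarrow> ip W D) (at_right t)"
      by (rule tendsto_within_subset[OF lim]) (use t in auto)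
    show "\<forall>\<^sub>F s in at_right t. ip W (Q s) \<le> 0"
      unfolding eventually_at_filter
      by (rule always_eventually) (use t nc in \<open>auto simp: sgn intro!: divide_nonpos_pos\<close>)
    show "at_right t \<noteq> bot" by simp
  qed
  have ge: "ip W D \<ge> 0"
  proof (rule tendsto_lowerbound)
    have eq: "at t within {0..t} = at_left t" using t by (rule at_within_Icc_at_left)
    show "((\<lambda>s. ip W (Q s)) \<longlongrightarrow> ip W D) (at_left t)"
      unfolding eq[symmetric] by (rule tendsto_within_subset[OF lim]) auto
    show "\<forall>\<^sub>F s in at_left t. 0 \<le> ip W (Q s)"
      unfolding eq[symmetric] eventually_at_filter
      by (rule always_eventually) (use t nc in \<open>auto simp: sgn intro!: divide_nonpos_neg\<close>)
    show "at_left t \<noteq> bot" by simp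
  qed
  show ?thesis using le ge by simp
qed


definition sbdd :: "real \<Rightarrow> real \<Rightarrow> (real \<Rightarrow> real) \<Rightarrow> real \<Rightarrow> bool" where
  "sbdd a b f M \<longleftrightarrow> (\<forall>s\<in>{a..b}. \<bar>f s\<bar> \<le> M)"

definition PL :: "real \<Rightarrow> real \<Rightarrow> (real \<Rightarrow> real) \<Rightarrow> bool" where
  "PL a b f \<longleftrightarrow> (\<exists>B. plip a b f B) \<and> (\<exists>M. sbdd a b f M)"

definition cplip :: "real \<Rightarrow> real \<Rightarrow> (real \<Rightarrow> real \<Rightarrow> real) \<Rightarrow> real \<Rightarrow> bool" where
  "cplip a b A L \<longleftrightarrow> (\<forall>x\<in>{a..b}. \<exists>d>0. \<forall>y\<in>{a..b}. \<bar>y - x\<bar> < d \<longrightarrow>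
      nrm (\<lambda>m. A y m - A x m) \<le> L * \<bar>y - x\<bar>)"

definition cbdd :: "real \<Rightarrow> real \<Rightarrow> (real \<Rightarrow> real \<Rightarrow> real) \<Rightarrow> real \<Rightarrow> bool" where
  "cbdd a b A M \<longleftrightarrow> (\<forall>s\<in>{a..b}. A s \<in> L2 \<and> nrm (A s) \<le> M)"

definition CPL :: "real \<Rightarrow> real \<Rightarrow> (real \<Rightarrow> real \<Rightarrow> real) \<Rightarrow> bool" where
  "CPL a b A \<longleftrightarrow> (\<exists>L. cplip a b A L) \<and> (\<exists>M. cbdd a b A M)"

lemma plip_add: "plip a b f B1 \<Longrightarrow> plip a b g B2 \<Longrightarrow> plip a b (\<lambda>s. f s + g s) (B1 + B2)"
  unfolding plip_def
proof
  fix x assume f: "\<forall>x\<in>{a..b}. \<exists>d>0. \<forall>y\<in>{a..b}. \<bar>y - x\<bar> < d \<longrightarrow> \<bar>f y - f x\<bar> \<le> B1 * \<bar>y - x\<bar>"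
    and g: "\<forall>x\<in>{a..b}. \<exists>d>0. \<forall>y\<in>{a..b}. \<bar>y - x\<bar> < d \<longrightarrow> \<bar>g y - g x\<bar> \<le> B2 * \<bar>y - x\<bar>"
    and x: "x \<in> {a..b}"
  obtain d1 where d1: "d1 > 0" "\<forall>y\<in>{a..b}. \<bar>y - x\<bar> < d1 \<longrightarrow> \<bar>f y - f x\<bar> \<le> B1 * \<bar>y - x\<bar>"
    using f x by blast
  obtain d2 where d2: "d2 > 0" "\<forall>y\<in>{a..b}. \<bar>y - x\<bar> < d2 \<longrightarrow> \<bar>g y - g x\<bar> \<le> B2 * \<bar>y - x\<bar>"
    using g x by blast
  show "\<exists>d>0. \<forall>y\<in>{a..b}. \<bar>y - x\<bar> < d \<longrightarrow> \<bar>f y + g y - (f x + g x)\<bar> \<le> (B1 + B2) * \<bar>y - x\<bar>"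
  proof (intro exI[of _ "min d1 d2"] conjI ballI impI)
    show "min d1 d2 > 0" using d1 d2 by simp
    fix y assume y: "y \<in> {a..b}" "\<bar>y - x\<bar> < min d1 d2"
    have "\<bar>f y + g y - (f x + g x)\<bar> \<le> \<bar>f y - f x\<bar> + \<bar>g y - g x\<bar>" by simp
    also have "\<dots> \<le> B1 * \<bar>y - x\<bar> + B2 * \<bar>y - x\<bar>" using d1 d2 y by (intro add_mono) auto
    finally show "\<bar>f y + g y - (f x + g x)\<bar> \<le> (B1 + B2) * \<bar>y - x\<bar>" by (simp add: distrib_right)
  qed
qed

lemma plip_cmult: "plip a b f B \<Longrightarrow> plip a b (\<lambda>s. c * f s) (\<bar>c\<bar> * B)"
  unfolding plip_def
proof
  fix x assume f: "\<forall>x\<in>{a..b}. \<exists>d>0. \<forall>y\<in>{a..b}. \<bar>y - x\<bar> < d \<longrightarrow> \<bar>f y - f x\<bar> \<le> B * \<bar>y - x\<bar>"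
    and x: "x \<in> {a..b}"
  obtain d1 where d1: "d1 > 0" "\<forall>y\<in>{a..b}. \<bar>y - x\<bar> < d1 \<longrightarrow> \<bar>f y - f x\<bar> \<le> B * \<bar>y - x\<bar>"
    using f x by blast
  show "\<exists>d>0. \<forall>y\<in>{a..b}. \<bar>y - x\<bar> < d \<longrightarrow> \<bar>c * f y - c * f x\<bar> \<le> \<bar>c\<bar> * B * \<bar>y - x\<bar>"
  proof (intro exI[of _ d1] conjI ballI impI)
    show "d1 > 0" by (rule d1)
    fix y assume y: "y \<in> {a..b}" "\<bar>y - x\<bar> < d1"
    have "\<bar>c * f y - c * f x\<bar> = \<bar>c\<bar> * \<bar>f y - f x\<bar>" by (simp add: abs_mult[symmetric] right_diff_distrib)
    also have "\<dots> \<le> \<bar>c\<bar> * (B * \<bar>y - x\<bar>)" using d1 y by (intro mult_left_mono) auto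
    finally show "\<bar>c * f y - c * f x\<bar> \<le> \<bar>c\<bar> * B * \<bar>y - x\<bar>" by (simp add: mult.assoc)
  qed
qed

lemma plip_mult:
  assumes "plip a b f B1" "sbdd a b f M1" "plip a b g B2" "sbdd a b g M2"
  shows "plip a b (\<lambda>s. f s * g s) (B1 * M2 + M1 * B2)"
  unfolding plip_def
proof
  fix x assume x: "x \<in> {a..b}"
  obtain d1 where d1: "d1 > 0" "\<forall>y\<in>{a..b}. \<bar>y - x\<bar> < d1 \<longrightarrow> \<bar>f y - f x\<bar> \<le> B1 * \<bar>y - x\<bar>"
    using assms(1) x unfolding plip_def by blast
  obtain d2 where d2: "d2 > 0" "\<forall>y\<in>{a..b}. \<bar>y - x\<bar> < d2 \<longrightarrow> \<bar>g y - g x\<bar> \<le> B2 * \<bar>y - x\<bar>"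
    using assms(3) x unfolding plip_def by blast
  show "\<exists>d>0. \<forall>y\<in>{a..b}. \<bar>y - x\<bar> < d \<longrightarrow> \<bar>f y * g y - f x * g x\<bar> \<le> (B1 * M2 + M1 * B2) * \<bar>y - x\<bar>"
  proof (intro exI[of _ "min d1 d2"] conjI ballI impI)
    show "min d1 d2 > 0" using d1 d2 by simp
    fix y assume y: "y \<in> {a..b}" "\<bar>y - x\<bar> < min d1 d2"
    have e: "f y * g y - f x * g x = (f y - f x) * g y + f x * (g y - g x)" by (simp add: algebra_simps)
    have "\<bar>f y * g y - f x * g x\<bar> \<le> \<bar>f y - f x\<bar> * \<bar>g y\<bar> + \<bar>f x\<bar> * \<bar>g y - g x\<bar>"
      unfolding e by (metis abs_mult abs_triangle_ineq)
    also have "\<dots> \<le> (B1 * \<bar>y - x\<bar>) * M2 + M1 * (B2 * \<bar>y - x\<bar>)"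
    proof (intro add_mono mult_mono)
      show "\<bar>f y - f x\<bar> \<le> B1 * \<bar>y - x\<bar>" using d1 y by auto
      show "\<bar>g y - g x\<bar> \<le> B2 * \<bar>y - x\<bar>" using d2 y by auto
      show "\<bar>g y\<bar> \<le> M2" using assms(4) y by (auto simp: sbdd_def)
      show "\<bar>f x\<bar> \<le> M1" using assms(2) x by (auto simp: sbdd_def)
      show "0 \<le> B1 * \<bar>y - x\<bar>" by (rule order.trans[OF abs_ge_zero]) (use d1 y in auto)
      show "0 \<le> M1" using assms(2) x by (meson abs_ge_zero order.trans sbdd_def)
    qed auto
    finally show "\<bar>f y * g y - f x * g x\<bar> \<le> (B1 * M2 + M1 * B2) * \<bar>y - x\<bar>"
      by (simp add: algebra_simps)
  qed
qed

lemma plip_const: "plip a b (\<lambda>s. c) 0"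
  unfolding plip_def by (auto intro: exI[of _ 1])

lemma sbdd_add: "sbdd a b f M1 \<Longrightarrow> sbdd a b g M2 \<Longrightarrow> sbdd a b (\<lambda>s. f s + g s) (M1 + M2)"
  unfolding sbdd_def by (meson abs_triangle_ineq add_mono order.trans)
lemma sbdd_cmult: "sbdd a b f M \<Longrightarrow> sbdd a b (\<lambda>s. c * f s) (\<bar>c\<bar> * M)"
  unfolding sbdd_def by (simp add: abs_mult mult_left_mono)
lemma sbdd_mult: "sbdd a b f M1 \<Longrightarrow> sbdd a b g M2 \<Longrightarrow> sbdd a b (\<lambda>s. f s * g s) (M1 * M2)"
  unfolding sbdd_def
proof
  fix s assume f: "\<forall>s\<in>{a..b}. \<bar>f s\<bar> \<le> M1" and g: "\<forall>s\<in>{a..b}. \<bar>g s\<bar> \<le> M2" and s: "s \<in> {a..b}"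
  have "\<bar>f s\<bar> * \<bar>g s\<bar> \<le> M1 * M2"
  proof (rule mult_mono)
    show "\<bar>f s\<bar> \<le> M1" "\<bar>g s\<bar> \<le> M2" using f g s by auto
    show "0 \<le> M1" by (rule order.trans[OF abs_ge_zero]) (use f s in auto)
  qed simp
  then show "\<bar>f s * g s\<bar> \<le> M1 * M2" by (simp add: abs_mult)
qed
lemma sbdd_const: "sbdd a b (\<lambda>s. c) \<bar>c\<bar>"
  unfolding sbdd_def by simp

lemma PL_add[intro]: "PL a b f \<Longrightarrow> PL a b g \<Longrightarrow> PL a b (\<lambda>s. f s + g s)"
  unfolding PL_def by (blast intro: plip_add sbdd_add)
lemma PL_cmult[intro]: "PL a b f \<Longrightarrow> PL a b (\<lambda>s. c * f s)"
  unfolding PL_def by (blast intro: plip_cmult sbdd_cmult)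
lemma PL_mult[intro]: "PL a b f \<Longrightarrow> PL a b g \<Longrightarrow> PL a b (\<lambda>s. f s * g s)"
  unfolding PL_def by (blast intro: plip_mult sbdd_mult)
lemma PL_const[intro]: "PL a b (\<lambda>s. c)"
  unfolding PL_def by (blast intro: plip_const sbdd_const)
lemma PL_diff[intro]: "PL a b f \<Longrightarrow> PL a b g \<Longrightarrow> PL a b (\<lambda>s. f s - g s)"
  using PL_add[of a b f "\<lambda>s. (-1) * g s"] PL_cmult[of a b g "-1"] by simp
lemma PL_power2[intro]: "PL a b f \<Longrightarrow> PL a b (\<lambda>s. (f s)^2)"
  using PL_mult[of a b f f] by (simp add: power2_eq_square)

lemma ip_plip:
  assumes "cplip a b A LA" "cbdd a b A MA" "cplip a b B LB" "cbdd a b B MB"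
  shows "plip a b (\<lambda>s. ip (A s) (B s)) (LA * MB + MA * LB)"
  unfolding plip_def
proof
  fix x assume x: "x \<in> {a..b}"
  obtain d1 where d1: "d1 > 0" "\<forall>y\<in>{a..b}. \<bar>y - x\<bar> < d1 \<longrightarrow> nrm (\<lambda>m. A y m - A x m) \<le> LA * \<bar>y - x\<bar>"
    using assms(1) x unfolding cplip_def by blast
  obtain d2 where d2: "d2 > 0" "\<forall>y\<in>{a..b}. \<bar>y - x\<bar> < d2 \<longrightarrow> nrm (\<lambda>m. B y m - B x m) \<le> LB * \<bar>y - x\<bar>"
    using assms(3) x unfolding cplip_def by blast
  show "\<exists>d>0. \<forall>y\<in>{a..b}. \<bar>y - x\<bar> < d \<longrightarrow> \<bar>ip (A y) (B y) - ip (A x) (B x)\<bar> \<le> (LA * MB + MA * LB) * \<bar>y - x\<bar>"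
  proof (intro exI[of _ "min d1 d2"] conjI ballI impI)
    show "min d1 d2 > 0" using d1 d2 by simp
    fix y assume y: "y \<in> {a..b}" "\<bar>y - x\<bar> < min d1 d2"
    have L: "A x \<in> L2" "A y \<in> L2" "B x \<in> L2" "B y \<in> L2" using assms(2,4) x y by (auto simp: cbdd_def)
    have e: "ip (A y) (B y) - ip (A x) (B x) = ip (\<lambda>m. A y m - A x m) (B y) + ip (A x) (\<lambda>m. B y m - B x m)"
      using L by (simp add: ip_lin)
    have "\<bar>ip (A y) (B y) - ip (A x) (B x)\<bar> \<le> \<bar>ip (\<lambda>m. A y m - A x m) (B y)\<bar> + \<bar>ip (A x) (\<lambda>m. B y m - B x m)\<bar>"
      unfolding e by (rule abs_triangle_ineq)
    also have "\<dots> \<le> nrm (\<lambda>m. A y m - A x m) * nrm (B y) + nrm (A x) * nrm (\<lambda>m. B y m - B x m)"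
      using L by (intro add_mono cauchy_schwarz) auto
    also have "\<dots> \<le> (LA * \<bar>y - x\<bar>) * MB + MA * (LB * \<bar>y - x\<bar>)"
    proof (intro add_mono mult_mono)
      show "nrm (\<lambda>m. A y m - A x m) \<le> LA * \<bar>y - x\<bar>" using d1 y by auto
      show "nrm (\<lambda>m. B y m - B x m) \<le> LB * \<bar>y - x\<bar>" using d2 y by auto
      show "nrm (B y) \<le> MB" using assms(4) y by (auto simp: cbdd_def)
      show "nrm (A x) \<le> MA" using assms(2) x by (auto simp: cbdd_def)
      show "0 \<le> LA * \<bar>y - x\<bar>" by (rule order.trans[OF nrm_nonneg]) (use d1 y in auto)
      show "0 \<le> MA" using assms(2) x by (meson nrm_nonneg order.trans cbdd_def)
    qed (auto simp: nrm_nonneg)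
    finally show "\<bar>ip (A y) (B y) - ip (A x) (B x)\<bar> \<le> (LA * MB + MA * LB) * \<bar>y - x\<bar>"
      by (simp add: algebra_simps)
  qed
qed

lemma ip_sbdd: "cbdd a b A MA \<Longrightarrow> cbdd a b B MB \<Longrightarrow> sbdd a b (\<lambda>s. ip (A s) (B s)) (MA * MB)"
  unfolding sbdd_def cbdd_def
proof
  fix s assume A: "\<forall>s\<in>{a..b}. A s \<in> L2 \<and> nrm (A s) \<le> MA" and B: "\<forall>s\<in>{a..b}. B s \<in> L2 \<and> nrm (B s) \<le> MB"
    and s: "s \<in> {a..b}"
  have "\<bar>ip (A s) (B s)\<bar> \<le> nrm (A s) * nrm (B s)" using A B s by (intro cauchy_schwarz) auto
  also have "\<dots> \<le> MA * MB"
  proof (rule mult_mono)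
    show "nrm (A s) \<le> MA" "nrm (B s) \<le> MB" using A B s by auto
    show "0 \<le> MA" by (rule order.trans[OF nrm_nonneg]) (use A s in auto)
  qed (rule nrm_nonneg)
  finally show "\<bar>ip (A s) (B s)\<bar> \<le> MA * MB" .
qed

lemma PL_ip[intro]: "CPL a b A \<Longrightarrow> CPL a b B \<Longrightarrow> PL a b (\<lambda>s. ip (A s) (B s))"
  unfolding CPL_def PL_def by (blast intro: ip_plip ip_sbdd)

lemma CPL_const[intro]: "f \<in> L2 \<Longrightarrow> CPL a b (\<lambda>s. f)"
proof -
  assume f: "f \<in> L2"
  have "cplip a b (\<lambda>s. f) 0" unfolding cplip_def by (auto simp: nrm_def2 intro: exI[of _ 1])
  moreover have "cbdd a b (\<lambda>s. f) (nrm f)" unfolding cbdd_def using f by simp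
  ultimately show ?thesis unfolding CPL_def by blast
qed

lemma PL_exp[intro]: "PL a b (\<lambda>s. exp (c * s))"
proof -
  define R where "R = \<bar>c\<bar> * (\<bar>a\<bar> + \<bar>b\<bar>)"
  have bd: "s \<in> {a..b} \<Longrightarrow> exp (c * s) \<le> exp R" for s
  proof -
    assume s: "s \<in> {a..b}"
    have "\<bar>s\<bar> \<le> \<bar>a\<bar> + \<bar>b\<bar>" using s by auto
    then have "\<bar>c\<bar> * \<bar>s\<bar> \<le> R" unfolding R_def by (rule mult_left_mono) simp
    moreover have "c * s \<le> \<bar>c\<bar> * \<bar>s\<bar>" by (metis abs_ge_self abs_mult)
    ultimately show "exp (c * s) \<le> exp R" by simp
  qed
  have lip: "\<bar>exp (c * y) - exp (c * x)\<bar> \<le> (\<bar>c\<bar> * exp R) * \<bar>y - x\<bar>"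
    if xy: "x \<in> {a..b}" "y \<in> {a..b}" for x y
  proof -
    have gen: "\<bar>exp (c * v) - exp (c * u)\<bar> \<le> (\<bar>c\<bar> * exp R) * \<bar>v - u\<bar>"
      if uv: "u \<in> {a..b}" "v \<in> {a..b}" "u < v" for u v
    proof -
      have dd: "\<And>x. ((\<lambda>s. exp (c * s)) has_real_derivative c * exp (c * x)) (at x)"
        by (auto intro!: derivative_eq_intros)
      obtain z where z: "u < z" "z < v" "exp (c * v) - exp (c * u) = (v - u) * (c * exp (c * z))"
        using MVT2[of u v "\<lambda>s. exp (c * s)" "\<lambda>s. c * exp (c * s)"] uv(3) dd by blast
      have zin: "z \<in> {a..b}" using z uv by auto
      have "\<bar>exp (c * v) - exp (c * u)\<bar> = \<bar>v - u\<bar> * (\<bar>c\<bar> * exp (c * z))" by (simp add: z(3) abs_mult)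
      also have "\<dots> \<le> \<bar>v - u\<bar> * (\<bar>c\<bar> * exp R)"
        by (intro mult_left_mono bd zin) auto
      finally show ?thesis by (simp add: mult.commute)
    qed
    show ?thesis
    proof (cases x y rule: linorder_cases)
      case less then show ?thesis using gen xy by blast
    next
      case equal then show ?thesis by simp
    next
      case greater then show ?thesis using gen[of y x] xy by (simp add: abs_minus_commute)
    qed
  qed
  have "plip a b (\<lambda>s. exp (c * s)) (\<bar>c\<bar> * exp R)"
    unfolding plip_def using lip by (auto intro: exI[of _ 1])
  moreover have "sbdd a b (\<lambda>s. exp (c * s)) (exp R)"
    unfolding sbdd_def using bd by simp
  ultimately show ?thesis unfolding PL_def by blast
qed

lemma cont_bounded:
  fixes h :: "real \<Rightarrow> real"
  assumes "continuous_on {a..b} h"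
  shows "\<exists>M. \<forall>s\<in>{a..b}. \<bar>h s\<bar> \<le> M"
proof -
  have "bounded (h ` {a..b})" by (rule compact_imp_bounded[OF compact_continuous_image[OF assms compact_Icc]])
  then show ?thesis unfolding bounded_real by auto
qed

lemma CPL_deriv:
  assumes ab: "{a..b} \<subseteq> S"
    and d: "\<And>s. s \<in> {a..b} \<Longrightarrow> L2_deriv_within A (A' s) s S"
    and L: "\<And>s. s \<in> S \<Longrightarrow> A s \<in> L2"
    and K: "\<And>s. s \<in> {a..b} \<Longrightarrow> nrm (A' s) \<le> K"
  shows "cplip a b A (K + 1)"
  unfolding cplip_def
proof
  fix x assume x: "x \<in> {a..b}"
  have "\<forall>\<^sub>F y in at x within S. nrm (\<lambda>m. (A y m - A x m) / (y - x) - A' x m) < 1"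
    by (rule order_tendstoD(2)[OF L2_deriv_lim[OF d[OF x]]]) simp
  then obtain d0 where d0: "d0 > 0" "\<forall>y\<in>S. y \<noteq> x \<and> dist y x < d0 \<longrightarrow>
      nrm (\<lambda>m. (A y m - A x m) / (y - x) - A' x m) < 1"
    unfolding eventually_at by blast
  show "\<exists>d>0. \<forall>y\<in>{a..b}. \<bar>y - x\<bar> < d \<longrightarrow> nrm (\<lambda>m. A y m - A x m) \<le> (K + 1) * \<bar>y - x\<bar>"
  proof (intro exI[of _ d0] conjI ballI impI)
    show "d0 > 0" by (rule d0)
    fix y assume y: "y \<in> {a..b}" "\<bar>y - x\<bar> < d0"
    show "nrm (\<lambda>m. A y m - A x m) \<le> (K + 1) * \<bar>y - x\<bar>"
    proof (cases "y = x")
      case True then show ?thesis by (simp add: nrm_def2)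
    next
      case False
      have yS: "y \<in> S" "x \<in> S" using ab x y by auto
      have "nrm (\<lambda>m. A y m - A x m) \<le> \<bar>y - x\<bar> * (nrm (\<lambda>m. (A y m - A x m) / (y - x) - A' x m) + nrm (A' x))"
        by (rule deriv_diff_bound[where S=S]) (use L yS False L2_deriv_D[OF d[OF x]] in auto)
      also have "\<dots> \<le> \<bar>y - x\<bar> * (1 + K)"
      proof (rule mult_left_mono)
        have "y \<noteq> x \<and> dist y x < d0" using False y(2) by (simp add: dist_real_def)
        then have "nrm (\<lambda>m. (A y m - A x m) / (y - x) - A' x m) < 1" using d0(2) yS(1) by blast
        then show "nrm (\<lambda>m. (A y m - A x m) / (y - x) - A' x m) + nrm (A' x) \<le> 1 + K"
          using K[OF x] by linarith
      qed simp
      finally show ?thesis by (simp add: mult.commute add.commute)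
    qed
  qed
qed

lemma nrm_cont_deriv:
  assumes ab: "{a..b} \<subseteq> S"
    and d: "\<And>s. s \<in> {a..b} \<Longrightarrow> L2_deriv_within A (A' s) s S"
    and L: "\<And>s. s \<in> S \<Longrightarrow> A s \<in> L2"
  shows "continuous_on {a..b} (\<lambda>s. nrm (A s))"
  unfolding continuous_on_def
proof
  fix x assume x: "x \<in> {a..b}"
  have xS: "x \<in> S" using ab x by auto
  have "((\<lambda>s. nrm (A s) - nrm (A x)) \<longlongrightarrow> 0) (at x within {a..b})"
  proof (rule Lim_null_comparison)
    show "\<forall>\<^sub>F s in at x within {a..b}. norm (nrm (A s) - nrm (A x)) \<le> nrm (\<lambda>m. A s m - A x m)"
      unfolding eventually_at_filter
    proof (rule always_eventually, intro allI impI)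
      fix s assume "s \<in> {a..b}"
      then have sS: "s \<in> S" using ab by auto
      have 1: "nrm (A s) \<le> nrm (\<lambda>m. A s m - A x m) + nrm (A x)" using L sS xS by (intro nrm_diff_le) auto
      have 2: "nrm (A x) \<le> nrm (\<lambda>m. A x m - A s m) + nrm (A s)" using L sS xS by (intro nrm_diff_le) auto
      have 3: "nrm (\<lambda>m. A x m - A s m) = nrm (\<lambda>m. A s m - A x m)" by (rule nrm_diff_sym)
      show "norm (nrm (A s) - nrm (A x)) \<le> nrm (\<lambda>m. A s m - A x m)"
        unfolding real_norm_def abs_le_iff using 1 2 3 by linarith
    qed
    show "((\<lambda>s. nrm (\<lambda>m. A s m - A x m)) \<longlongrightarrow> 0) (at x within {a..b})"
      by (rule tendsto_within_subset[OF deriv_cont[OF d[OF x] L L[OF xS]] ab])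
  qed
  then show "((\<lambda>s. nrm (A s)) \<longlongrightarrow> nrm (A x)) (at x within {a..b})" by (rule Lim_null[THEN iffD2])
qed


lemma sets_Om_iff: "A \<in> sets Om \<longleftrightarrow> A \<subseteq> {0<..<1} \<and> A \<in> sets lebesgue"
  unfolding Om_def by (subst sets_restrict_space_iff) auto

lemma measure_Om: "A \<subseteq> {0<..<1} \<Longrightarrow> A \<in> sets lborel \<Longrightarrow> measure Om A = measure lborel A"
  unfolding Om_def by (subst measure_restrict_space) auto

lemma measure_Om_Ioo: "0 \<le> c \<Longrightarrow> c \<le> 1 \<Longrightarrow> measure Om {0<..<c} = c"
  by (subst measure_Om) auto

lemma measure_Om_Ioc: "0 \<le> c \<Longrightarrow> c < 1 \<Longrightarrow> measure Om {0<..c} = c"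
  by (subst measure_Om) auto

lemma mono_meas_Om:
  fixes f :: "real \<Rightarrow> real"
  assumes "mono_on {0<..<1} f" shows "f \<in> borel_measurable Om"
proof -
  have m: "f \<in> borel_measurable (restrict_space borel {0<..<1})" by (rule borel_measurable_mono_on_fnc[OF assms])
  show ?thesis unfolding Om_def
  proof (rule measurableI)
    fix x assume "x \<in> space (lebesgue_on {0<..<1::real})"
    then show "f x \<in> space borel" by simp
  next
    fix B :: "real set" assume B: "B \<in> sets borel"
    have "f -` B \<inter> space (restrict_space borel {0<..<1}) \<in> sets (restrict_space borel {0<..<1})"
      using m B by (rule measurable_sets)
    then obtain S where S: "S \<in> sets borel" "f -` B \<inter> {0<..<1} = {0<..<1} \<inter> S"
      by (auto simp: sets_restrict_space space_restrict_space)
    have "S \<in> sets lebesgue" using S(1) by simp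
    then show "f -` B \<inter> space (lebesgue_on {0<..<1}) \<in> sets (lebesgue_on {0<..<1})"
      using S(2) by (auto simp: sets_restrict_space_iff)
  qed
qed

lemma quantile_mono:
  assumes "real_distribution \<mu>"
  shows "mono_on {0<..<1} (quantile \<mu>)"
proof -
  interpret real_distribution \<mu> by (rule assms)
  let ?C = "cdf \<mu>"
  show ?thesis unfolding mono_on_def
  proof (intro allI impI)
    fix r s :: real assume rs: "r \<in> {0<..<1} \<and> s \<in> {0<..<1} \<and> r \<le> s"
    have ne: "{x. ?C x > s} \<noteq> {}"
      using order_tendstoD(1)[OF cdf_lim_at_top_prob, of s] rs
      by (auto dest!: eventually_happens'[OF trivial_limit_at_top_linorder])
    obtain y where y: "?C y < r"
      using order_tendstoD(2)[OF cdf_lim_at_bot, of r] rs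
      by (auto dest!: eventually_happens'[OF trivial_limit_at_bot_linorder])
    have bdd: "bdd_below {x. ?C x > r}"
    proof (rule bdd_belowI[of _ y])
      fix x assume "x \<in> {x. ?C x > r}"
      then show "y \<le> x" using y cdf_nondecreasing[of x y] by (cases "x \<le> y") auto
    qed
    have "Inf {x. ?C x > r} \<le> Inf {x. ?C x > s}"
      by (rule cInf_superset_mono[OF ne bdd]) (use rs in auto)
    then show "quantile \<mu> r \<le> quantile \<mu> s" by (simp add: quantile_def cdf_def2)
  qed
qed

lemma quantile_props:
  assumes "real_distribution \<mu>" and m: "m \<in> {0<..<1}"
  shows "m < cdf \<mu> x \<Longrightarrow> quantile \<mu> m \<le> x"
    and "quantile \<mu> m \<le> x \<Longrightarrow> m \<le> cdf \<mu> x"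
proof -
  interpret real_distribution \<mu> by (rule assms)
  let ?C = "cdf \<mu>"
  have q: "quantile \<mu> m = Inf {x. ?C x > m}" by (simp add: quantile_def cdf_def2)
  have ne: "{x. ?C x > m} \<noteq> {}"
    using order_tendstoD(1)[OF cdf_lim_at_top_prob, of m] m
    by (auto dest!: eventually_happens'[OF trivial_limit_at_top_linorder])
  obtain y where y: "?C y < m"
    using order_tendstoD(2)[OF cdf_lim_at_bot, of m] m
    by (auto dest!: eventually_happens'[OF trivial_limit_at_bot_linorder])
  have bdd: "bdd_below {x. ?C x > m}"
  proof (rule bdd_belowI[of _ y])
    fix x assume "x \<in> {x. ?C x > m}"
    then show "y \<le> x" using y cdf_nondecreasing[of x y] by (cases "x \<le> y") auto
  qed
  show "m < ?C x \<Longrightarrow> quantile \<mu> m \<le> x"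
    unfolding q by (rule cInf_lower[OF _ bdd]) simp
  show "quantile \<mu> m \<le> x \<Longrightarrow> m \<le> ?C x"
  proof (rule ccontr)
    assume qx: "quantile \<mu> m \<le> x" and "\<not> m \<le> ?C x"
    then have Cx: "?C x < m" by simp
    have "((cdf \<mu>) \<longlongrightarrow> ?C x) (at_right x)"
      using cdf_is_right_cont[of x] by (simp add: continuous_within)
    then have "\<forall>\<^sub>F z in at_right x. ?C z < m" by (rule order_tendstoD(2)) (rule Cx)
    then obtain b where b: "b > x" "\<And>z. x < z \<Longrightarrow> z < b \<Longrightarrow> ?C z < m"
      unfolding eventually_at_right[of x "x + 1", simplified] by blast
    define z where "z = (x + b) / 2"
    have z: "x < z" "?C z < m" using b by (auto simp: z_def)
    have "z \<le> quantile \<mu> m" unfolding q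
    proof (rule cInf_greatest[OF ne])
      fix w assume "w \<in> {x. ?C x > m}"
      then have "?C w > m" by simp
      then show "z \<le> w" using z cdf_nondecreasing[of w z] by (cases "w \<le> z") auto
    qed
    then show False using qx z by simp
  qed
qed

lemma distr_quantile:
  assumes rd: "real_distribution \<mu>"
  shows "distr Om borel (quantile \<mu>) = \<mu>"
proof -
  interpret real_distribution \<mu> by (rule rd)
  have meas: "quantile \<mu> \<in> borel_measurable Om" by (rule mono_meas_Om[OF quantile_mono[OF rd]])
  show ?thesis
  proof (rule cdf_unique)
    show "real_distribution (distr Om borel (quantile \<mu>))"
      using meas by (rule Om.real_distribution_distr)
    show "real_distribution \<mu>" by (rule rd)
    show "cdf (distr Om borel (quantile \<mu>)) = cdf \<mu>"
    proof
      fix x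
      let ?A = "{m \<in> {0<..<1}. quantile \<mu> m \<le> x}"
      have cdfd: "cdf (distr Om borel (quantile \<mu>)) x = measure Om ?A"
        unfolding cdf_def using meas by (subst measure_distr) (auto simp: vimage_def Int_def conj_commute)
      have Ameas: "?A \<in> sets Om"
      proof -
        have "quantile \<mu> -` {..x} \<inter> space Om \<in> sets Om" using meas by (rule measurable_sets) simp
        moreover have "quantile \<mu> -` {..x} \<inter> space Om = ?A" by auto
        ultimately show ?thesis by simp
      qed
      let ?c = "cdf \<mu> x"
      have c01: "0 \<le> ?c" "?c \<le> 1" using cdf_nonneg cdf_bounded_prob by auto
      have sub1: "{0<..<?c} \<subseteq> ?A" using quantile_props(1)[OF rd] c01 by auto
      have sub2: "?A \<subseteq> {0<..<1} \<inter> {0<..?c}" using quantile_props(2)[OF rd] by auto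
      have "measure Om {0<..<?c} \<le> measure Om ?A"
        by (rule Om.finite_measure_mono[OF sub1 Ameas])
      then have lo: "?c \<le> measure Om ?A" using measure_Om_Ioo[OF c01] by simp
      have hi: "measure Om ?A \<le> ?c"
      proof (cases "?c < 1")
        case True
        have "{0<..<1} \<inter> {0<..?c} = {0<..?c}" using True by auto
        then have "measure Om ?A \<le> measure Om {0<..?c}"
          using sub2 by (intro Om.finite_measure_mono) (auto simp: sets_Om_iff True)
        then show ?thesis using measure_Om_Ioc[OF c01(1) True] by simp
      next
        case False
        then show ?thesis using Om.prob_le_1[of ?A] c01 by simp
      qed
      show "cdf (distr Om borel (quantile \<mu>)) x = cdf \<mu> x" using cdfd lo hi by simp
    qed
  qed
qed

lemma Inf_threshold:
  fixes a :: real
  assumes up: "\<And>y. y > a \<Longrightarrow> P y" and lo: "\<And>y. y < a \<Longrightarrow> \<not> P y"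
  shows "Inf {y. P y} = a"
proof (rule antisym)
  have ne: "{y. P y} \<noteq> {}" using up[of "a + 1"] by auto
  have lb: "\<And>y. P y \<Longrightarrow> a \<le> y" using lo by (meson not_le)
  have bdd: "bdd_below {y. P y}" by (rule bdd_belowI[of _ a]) (auto intro: lb)
  show "a \<le> Inf {y. P y}" by (rule cInf_greatest[OF ne]) (auto intro: lb)
  show "Inf {y. P y} \<le> a"
  proof (rule field_le_epsilon)
    fix e :: real assume "0 < e"
    then show "Inf {y. P y} \<le> a + e" by (intro cInf_lower[OF _ bdd]) (auto intro: up)
  qed
qed

lemma quantile_distr_mono:
  fixes Y :: "real \<Rightarrow> real"
  assumes Ymeas: "Y \<in> borel_measurable Om" and Ymono: "mono_on {0<..<1} Y"
    and m: "m \<in> {0<..<1}" and cont: "isCont Y m"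
  shows "quantile (distr Om borel Y) m = Y m"
proof -
  have F: "measure (distr Om borel Y) {..y} = measure Om {w \<in> {0<..<1}. Y w \<le> y}" for y
    using Ymeas by (subst measure_distr) (auto simp: vimage_def Int_def conj_commute)
  have Fmeas: "{w \<in> {0<..<1}. Y w \<le> y} \<in> sets Om" for y
  proof -
    have "Y -` {..y} \<inter> space Om \<in> sets Om" using Ymeas by (rule measurable_sets) simp
    moreover have "Y -` {..y} \<inter> space Om = {w \<in> {0<..<1}. Y w \<le> y}" by auto
    ultimately show ?thesis by simp
  qed
  have eps: "\<exists>d>0. \<forall>w. \<bar>w - m\<bar> < d \<longrightarrow> \<bar>Y w - Y m\<bar> < e" if "e > 0" for e
  proof -
    from cont that obtain d where "d > 0" "\<forall>w. w \<noteq> m \<and> norm (w - m) < d \<longrightarrow> norm (Y w - Y m) < e"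
      unfolding isCont_def LIM_eq by blast
    moreover have "e > 0" by (rule that)
    ultimately have "\<forall>w. \<bar>w - m\<bar> < d \<longrightarrow> \<bar>Y w - Y m\<bar> < e"
      by (metis abs_zero diff_self real_norm_def)
    then show ?thesis using \<open>d > 0\<close> by blast
  qed
  have mono': "\<And>u w. u \<in> {0<..<1} \<Longrightarrow> w \<in> {0<..<1} \<Longrightarrow> u \<le> w \<Longrightarrow> Y u \<le> Y w"
    using Ymono by (auto simp: mono_on_def)
  show ?thesis unfolding quantile_def
  proof (rule Inf_threshold)
    fix y assume y: "y > Y m"
    obtain d where d: "d > 0" "\<forall>w. \<bar>w - m\<bar> < d \<longrightarrow> \<bar>Y w - Y m\<bar> < y - Y m"
      using eps[of "y - Y m"] y by auto
    define r where "r = min (m + d / 2) 1"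
    have r: "m < r" "r \<le> 1" using d m by (auto simp: r_def)
    have sub: "{0<..<r} \<subseteq> {w \<in> {0<..<1}. Y w \<le> y}"
    proof
      fix w assume w: "w \<in> {0<..<r}"
      then have w01: "w \<in> {0<..<1}" using r by auto
      show "w \<in> {w \<in> {0<..<1}. Y w \<le> y}"
      proof (cases "w \<le> m")
        case True then show ?thesis using mono'[OF w01 m True] y w01 by auto
      next
        case False
        then have "\<bar>w - m\<bar> < d" using w d by (auto simp: r_def)
        then show ?thesis using d(2) w01 by auto
      qed
    qed
    have "measure Om {0<..<r} \<le> measure Om {w \<in> {0<..<1}. Y w \<le> y}"
      by (rule Om.finite_measure_mono[OF sub Fmeas])
    then show "measure (distr Om borel Y) {..y} > m" using measure_Om_Ioo[of r] r m F by auto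
  next
    fix y assume y: "y < Y m"
    obtain d0 where d0: "d0 > 0" "\<forall>w. \<bar>w - m\<bar> < d0 \<longrightarrow> \<bar>Y w - Y m\<bar> < Y m - y"
      using eps[of "Y m - y"] y by auto
    define d where "d = min d0 m"
    have d: "0 < d" "d \<le> m" "d \<le> d0" using d0 m by (auto simp: d_def)
    have sub: "{w \<in> {0<..<1}. Y w \<le> y} \<subseteq> {0<..m - d}"
    proof
      fix w assume w: "w \<in> {w \<in> {0<..<1}. Y w \<le> y}"
      have "w \<le> m - d"
      proof (rule ccontr)
        assume "\<not> w \<le> m - d"
        then have wg: "w > m - d" by simp
        show False
        proof (cases "m \<le> w")
          case True then show False using mono'[OF m _ True] w y by auto
        next
          case False
          then have "\<bar>w - m\<bar> < d0" using wg d by auto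
          then show False using d0(2) w by auto
        qed
      qed
      then show "w \<in> {0<..m - d}" using w by auto
    qed
    have "measure Om {w \<in> {0<..<1}. Y w \<le> y} \<le> measure Om {0<..m - d}"
      using sub m d by (intro Om.finite_measure_mono) (auto simp: sets_Om_iff)
    also have "\<dots> = m - d" using m d by (intro measure_Om_Ioc) auto
    finally show "\<not> measure (distr Om borel Y) {..y} > m" using F d by auto
  qed
qed

lemma AE_Om_lborel: "AE x in lborel. P x \<Longrightarrow> AE x in Om. P x"
  unfolding Om_def by (subst AE_restrict_space_iff) (auto dest: AE_completion intro: AE_mp)

lemma AE_Om_countable: "countable N \<Longrightarrow> AE x in Om. x \<notin> N"
  by (rule AE_Om_lborel, rule AE_I'[OF countable_imp_null_set_lborel]) auto

lemma AE_isCont_mono: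
  fixes Y :: "real \<Rightarrow> real"
  assumes "mono_on {0<..<1} Y"
  shows "AE m in Om. isCont Y m"
proof -
  have c: "countable {a\<in>{0<..<1}. \<not> continuous (at a within {0<..<1}) Y}"
    by (rule mono_on_ctble_discont[OF assms])
  have "AE m in Om. m \<notin> {a\<in>{0<..<1}. \<not> continuous (at a within {0<..<1}) Y}"
    by (rule AE_Om_countable[OF c])
  moreover have "AE m in Om. m \<in> {0<..<1}" by (rule AE_I2) simp
  ultimately show ?thesis
    by eventually_elim (auto simp: at_within_open[of _ "{0<..<1}"] continuous_def isCont_def)
qed

lemma rinf_emeasure:
  fixes c y :: real
  shows "emeasure (density lborel (\<lambda>x. ennreal (indicator {c - 1<..<c + 1} x / 2))) {..y}
     = ennreal (if y \<le> c - 1 then 0 else if y < c + 1 then (y - c + 1) / 2 else 1)"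
proof -
  let ?I = "{c - 1<..<c + 1}"
  have "emeasure (density lborel (\<lambda>x. ennreal (indicator ?I x / 2))) {..y}
      = (\<integral>\<^sup>+ x. ennreal (indicator ?I x / 2) * indicator {..y} x \<partial>lborel)"
    by (rule emeasure_density) auto
  also have "\<dots> = (\<integral>\<^sup>+ x. ennreal (1 / 2) * indicator (?I \<inter> {..y}) x \<partial>lborel)"
    by (rule nn_integral_cong) (auto split: split_indicator)
  also have "\<dots> = ennreal (1 / 2) * emeasure lborel (?I \<inter> {..y})"
    by (rule nn_integral_cmult_indicator) auto
  also have "\<dots> = ennreal (if y \<le> c - 1 then 0 else if y < c + 1 then (y - c + 1) / 2 else 1)"
  proof (cases "y \<le> c - 1")
    case True
    then have "?I \<inter> {..y} = {}" by auto
    then show ?thesis using True by simp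
  next
    case False
    show ?thesis
    proof (cases "y < c + 1")
      case True
      then have eq: "?I \<inter> {..y} = {c - 1<..y}" using False by auto
      have l: "c - 1 \<le> y" using False by simp
      have "ennreal (1 / 2) * emeasure lborel (?I \<inter> {..y}) = ennreal (1 / 2) * ennreal (y - (c - 1))"
        by (simp only: eq emeasure_lborel_Ioc[OF l])
      also have "\<dots> = ennreal (1 / 2 * (y - (c - 1)))"
        by (rule ennreal_mult[symmetric]) (use l in auto)
      also have "\<dots> = ennreal ((y - c + 1) / 2)"
        by (rule arg_cong[where f=ennreal]) simp
      finally show ?thesis using False True by simp
    next
      case False2: False
      then have eq: "?I \<inter> {..y} = ?I" by auto
      have l: "c - 1 \<le> c + 1" by simp
      have "ennreal (1 / 2) * emeasure lborel (?I \<inter> {..y}) = ennreal (1 / 2) * ennreal (c + 1 - (c - 1))"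
        by (simp only: eq emeasure_lborel_Ioo[OF l])
      also have "\<dots> = ennreal (1 / 2 * (c + 1 - (c - 1)))"
        by (rule ennreal_mult[symmetric]) auto
      also have "\<dots> = ennreal 1"
        by (rule arg_cong[where f=ennreal]) simp
      finally show ?thesis using False False2 by simp
    qed
  qed
  finally show ?thesis .
qed

lemma rinf_quantile:
  fixes c m :: real
  assumes m: "m \<in> {0<..<1}"
  shows "quantile (density lborel (\<lambda>x. ennreal (indicator {c - 1<..<c + 1} x / 2))) m = c - 1 + 2 * m"
proof -
  let ?\<rho> = "density lborel (\<lambda>x. ennreal (indicator {c - 1<..<c + 1} x / 2))"
  let ?g = "\<lambda>y. if y \<le> c - 1 then 0 else if y < c + 1 then (y - c + 1) / 2 else 1::real"
  have M: "measure ?\<rho> {..y} = ?g y" for y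
    unfolding measure_def rinf_emeasure by simp
  show ?thesis unfolding quantile_def M
    by (rule Inf_threshold) (use m in auto)
qed


lemma int_Z: "ip (\<lambda>m. 2 * m - 1) (\<lambda>m. 1) = 0"
proof -
  have L: "(\<lambda>m. 2 * m - 1) \<in> L2" by auto
  have int: "integrable Om (\<lambda>m::real. 2 * m - 1)" using L2_int[OF L] .
  have "((\<lambda>x::real. 2 * x - 1) has_integral ((1^2 - 1) - (0^2 - 0))) {0..1}"
    by (rule fundamental_theorem_of_calculus)
       (auto intro!: derivative_eq_intros simp: has_real_derivative_iff_has_vector_derivative[symmetric])
  then have "integral {0..1} (\<lambda>x::real. 2 * x - 1) = 0" by (simp add: integral_unique)
  then have "integral {0<..<1} (\<lambda>x::real. 2 * x - 1) = 0" by (simp add: integral_open_interval_real)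
  moreover have "(\<integral>m. 2 * m - 1 \<partial>Om) = integral {0<..<1} (\<lambda>x::real. 2 * x - 1)"
    using int unfolding Om_def by (intro lebesgue_integral_eq_integral) auto
  ultimately show ?thesis by (simp add: ip_def2)
qed

lemma lin_aux: "X = P - Q \<Longrightarrow> X - (a - b) = (P - a) + - (Q - b)" for X P Q a b :: real
  by simp

lemma L2_deriv_subset: "L2_deriv_within A A' t S \<Longrightarrow> T \<subseteq> S \<Longrightarrow> L2_deriv_within A A' t T"
  unfolding L2_deriv_within_def by (auto intro: tendsto_within_subset)

lemma L2_deriv_sub:
  assumes dA: "L2_deriv_within A A' t S" and C: "C \<in> L2"
    and dg: "(g has_real_derivative g') (at t within S)"
    and LA: "\<And>s. s \<in> S \<Longrightarrow> A s \<in> L2" "A t \<in> L2"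
  shows "L2_deriv_within (\<lambda>s m. A s m - C m - g s) (\<lambda>m. A' m - g') t S"
proof -
  have DA: "A' \<in> L2" using dA by (rule L2_deriv_D)
  have gq: "((\<lambda>s. (g s - g t) / (s - t) - g') \<longlongrightarrow> 0) (at t within S)"
    using dg unfolding has_field_derivative_iff by (rule Lim_null[THEN iffD1])
  have "((\<lambda>s. nrm (\<lambda>m. (A s m - C m - g s - (A t m - C m - g t)) / (s - t) - (A' m - g'))) \<longlongrightarrow> 0) (at t within S)"
  proof (rule Lim_null_comparison)
    show "\<forall>\<^sub>F s in at t within S. norm (nrm (\<lambda>m. (A s m - C m - g s - (A t m - C m - g t)) / (s - t) - (A' m - g')))
       \<le> nrm (\<lambda>m. (A s m - A t m) / (s - t) - A' m) + \<bar>(g s - g t) / (s - t) - g'\<bar>"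
      unfolding eventually_at_filter
    proof (rule always_eventually, intro allI impI)
      fix s assume s: "s \<noteq> t" "s \<in> S"
      have e1: "(A s m - C m - g s - (A t m - C m - g t)) / (s - t) = (A s m - A t m) / (s - t) - (g s - g t) / (s - t)" for m
        by (simp add: diff_divide_distrib[symmetric])
      have eq: "(\<lambda>m. (A s m - C m - g s - (A t m - C m - g t)) / (s - t) - (A' m - g'))
        = (\<lambda>m. ((A s m - A t m) / (s - t) - A' m) + (- ((g s - g t) / (s - t) - g')))"
        by (rule ext, rule lin_aux, rule e1)
      have "nrm (\<lambda>m. ((A s m - A t m) / (s - t) - A' m) + (- ((g s - g t) / (s - t) - g')))
          \<le> nrm (\<lambda>m. (A s m - A t m) / (s - t) - A' m) + nrm (\<lambda>m. - ((g s - g t) / (s - t) - g'))"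
        by (rule nrm_triangle) (use LA s DA in auto)
      also have "nrm (\<lambda>m. - ((g s - g t) / (s - t) - g')) = \<bar>(g s - g t) / (s - t) - g'\<bar>"
        using nrm_cmult[of "- ((g s - g t) / (s - t) - g')" "\<lambda>m. 1"] by (simp add: nrm_one)
      finally show "norm (nrm (\<lambda>m. (A s m - C m - g s - (A t m - C m - g t)) / (s - t) - (A' m - g')))
       \<le> nrm (\<lambda>m. (A s m - A t m) / (s - t) - A' m) + \<bar>(g s - g t) / (s - t) - g'\<bar>"
        unfolding eq by (simp add: nrm_nonneg)
    qed
    have "((\<lambda>s. nrm (\<lambda>m. (A s m - A t m) / (s - t) - A' m) + \<bar>(g s - g t) / (s - t) - g'\<bar>) \<longlongrightarrow> 0 + \<bar>0\<bar>) (at t within S)"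
      by (intro tendsto_intros L2_deriv_lim[OF dA] gq)
    then show "((\<lambda>s. nrm (\<lambda>m. (A s m - A t m) / (s - t) - A' m) + \<bar>(g s - g t) / (s - t) - g'\<bar>) \<longlongrightarrow> 0) (at t within S)"
      by simp
  qed
  then show ?thesis unfolding L2_deriv_within_def nrm_def using DA by auto
qed

lemma eq_from_deriv:
  fixes f :: "real \<Rightarrow> real"
  assumes ab: "a \<le> b" and pl: "PL a b f" and negN: "negligible N"
    and der: "\<And>t. t \<in> {a<..<b} \<Longrightarrow> t \<notin> N \<Longrightarrow> (f has_real_derivative 0) (at t within {a..b})"
  shows "f b = f a"
proof -
  obtain B where B: "plip a b f B" using pl unfolding PL_def by blast
  have "plip a b (\<lambda>s. (-1) * f s) (\<bar>-1\<bar> * B)" by (rule plip_cmult[OF B])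
  then have B': "plip a b (\<lambda>s. - f s) B" by simp
  have 1: "f b \<le> f a"
    by (rule mono_ae[OF ab B negN]) (use der in blast)
  have 2: "- f b \<le> - f a"
    by (rule mono_ae[OF ab B' negN]) (use der in \<open>blast intro: DERIV_minus[where D=0, simplified]\<close>)
  show ?thesis using 1 2 by simp
qed

lemma CPL_sub:
  assumes "CPL a b A" "C \<in> L2" "PL a b g"
  shows "CPL a b (\<lambda>s m. A s m - C m - g s)"
proof -
  obtain LA MA where A: "cplip a b A LA" "cbdd a b A MA" using assms(1) unfolding CPL_def by blast
  obtain Bg Mg where g: "plip a b g Bg" "sbdd a b g Mg" using assms(3) unfolding PL_def by blast
  have "cplip a b (\<lambda>s m. A s m - C m - g s) (LA + Bg)"
    unfolding cplip_def
  proof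
    fix x assume x: "x \<in> {a..b}"
    obtain d1 where d1: "d1 > 0" "\<forall>y\<in>{a..b}. \<bar>y - x\<bar> < d1 \<longrightarrow> nrm (\<lambda>m. A y m - A x m) \<le> LA * \<bar>y - x\<bar>"
      using A(1) x unfolding cplip_def by blast
    obtain d2 where d2: "d2 > 0" "\<forall>y\<in>{a..b}. \<bar>y - x\<bar> < d2 \<longrightarrow> \<bar>g y - g x\<bar> \<le> Bg * \<bar>y - x\<bar>"
      using g(1) x unfolding plip_def by blast
    show "\<exists>d>0. \<forall>y\<in>{a..b}. \<bar>y - x\<bar> < d \<longrightarrow>
        nrm (\<lambda>m. A y m - C m - g y - (A x m - C m - g x)) \<le> (LA + Bg) * \<bar>y - x\<bar>"
    proof (intro exI[of _ "min d1 d2"] conjI ballI impI)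
      show "min d1 d2 > 0" using d1 d2 by simp
      fix y assume y: "y \<in> {a..b}" "\<bar>y - x\<bar> < min d1 d2"
      have L: "A x \<in> L2" "A y \<in> L2" using A(2) x y by (auto simp: cbdd_def)
      have eq: "(\<lambda>m. A y m - C m - g y - (A x m - C m - g x)) = (\<lambda>m. (A y m - A x m) + (- (g y - g x)))"
        by auto
      have "nrm (\<lambda>m. (A y m - A x m) + (- (g y - g x))) \<le> nrm (\<lambda>m. A y m - A x m) + nrm (\<lambda>m. - (g y - g x))"
        by (rule nrm_triangle) (use L in auto)
      also have "nrm (\<lambda>m. - (g y - g x)) = \<bar>g y - g x\<bar>"
        using nrm_cmult[of "- (g y - g x)" "\<lambda>m. 1"] by (simp add: nrm_one)
      also have "nrm (\<lambda>m. A y m - A x m) + \<bar>g y - g x\<bar> \<le> LA * \<bar>y - x\<bar> + Bg * \<bar>y - x\<bar>"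
        using d1 d2 y by (intro add_mono) auto
      finally show "nrm (\<lambda>m. A y m - C m - g y - (A x m - C m - g x)) \<le> (LA + Bg) * \<bar>y - x\<bar>"
        unfolding eq by (simp add: distrib_right)
    qed
  qed
  moreover have "cbdd a b (\<lambda>s m. A s m - C m - g s) (MA + nrm C + Mg)"
    unfolding cbdd_def
  proof
    fix s assume s: "s \<in> {a..b}"
    have L: "A s \<in> L2" "nrm (A s) \<le> MA" using A(2) s by (auto simp: cbdd_def)
    have gs: "\<bar>g s\<bar> \<le> Mg" using g(2) s by (auto simp: sbdd_def)
    have "nrm (\<lambda>m. (A s m - C m) + (- g s)) \<le> nrm (\<lambda>m. A s m - C m) + nrm (\<lambda>m. - g s)"
      by (rule nrm_triangle) (use L assms(2) in auto)
    also have "nrm (\<lambda>m. - g s) = \<bar>g s\<bar>"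
      using nrm_cmult[of "- g s" "\<lambda>m. 1"] by (simp add: nrm_one)
    also have "nrm (\<lambda>m. A s m - C m) \<le> nrm (A s) + nrm C"
      using nrm_triangle[of "A s" "\<lambda>m. - C m"] L assms(2) nrm_cmult[of "-1" C] by simp
    finally have "nrm (\<lambda>m. A s m - C m - g s) \<le> MA + nrm C + Mg" using L gs by simp
    then show "(\<lambda>m. A s m - C m - g s) \<in> L2 \<and> nrm (\<lambda>m. A s m - C m - g s) \<le> MA + nrm C + Mg"
      using L assms(2) by auto
  qed
  ultimately show ?thesis unfolding CPL_def by blast
qed

lemma PL_sqrt:
  assumes pl: "PL a b f" and nn: "\<And>s. s \<in> {a..b} \<Longrightarrow> f s \<ge> 0" and dpos: "\<delta> > 0"
  shows "PL a b (\<lambda>s. sqrt (f s + \<delta>))"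
proof -
  obtain B M where B: "plip a b f B" "sbdd a b f M" using pl unfolding PL_def by blast
  have sq: "\<bar>sqrt (u + \<delta>) - sqrt (v + \<delta>)\<bar> \<le> \<bar>u - v\<bar> / sqrt \<delta>" if "u \<ge> 0" "v \<ge> 0" for u v
  proof -
    have pu: "sqrt (u + \<delta>) \<ge> sqrt \<delta>" "sqrt (v + \<delta>) \<ge> sqrt \<delta>" using that by auto
    have sd: "sqrt \<delta> > 0" using dpos by simp
    have "(sqrt (u + \<delta>) - sqrt (v + \<delta>)) * (sqrt (u + \<delta>) + sqrt (v + \<delta>)) = u - v"
      using that dpos by (simp add: algebra_simps)
    then have "\<bar>sqrt (u + \<delta>) - sqrt (v + \<delta>)\<bar> * (sqrt (u + \<delta>) + sqrt (v + \<delta>)) = \<bar>u - v\<bar>"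
      by (metis abs_mult abs_of_nonneg add_nonneg_nonneg real_sqrt_ge_zero that dpos less_imp_le add_nonneg_nonneg)
    moreover have "\<bar>sqrt (u + \<delta>) - sqrt (v + \<delta>)\<bar> * sqrt \<delta> \<le> \<bar>sqrt (u + \<delta>) - sqrt (v + \<delta>)\<bar> * (sqrt (u + \<delta>) + sqrt (v + \<delta>))"
    proof (rule mult_left_mono)
      show "sqrt \<delta> \<le> sqrt (u + \<delta>) + sqrt (v + \<delta>)" using pu(1) real_sqrt_ge_zero[of "v + \<delta>"] that dpos by linarith
    qed simp
    ultimately show ?thesis using sd by (simp add: field_simps)
  qed
  have "plip a b (\<lambda>s. sqrt (f s + \<delta>)) (B / sqrt \<delta>)"
    unfolding plip_def
  proof
    fix x assume x: "x \<in> {a..b}"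
    obtain d where d: "d > 0" "\<forall>y\<in>{a..b}. \<bar>y - x\<bar> < d \<longrightarrow> \<bar>f y - f x\<bar> \<le> B * \<bar>y - x\<bar>"
      using B(1) x unfolding plip_def by blast
    show "\<exists>d>0. \<forall>y\<in>{a..b}. \<bar>y - x\<bar> < d \<longrightarrow> \<bar>sqrt (f y + \<delta>) - sqrt (f x + \<delta>)\<bar> \<le> B / sqrt \<delta> * \<bar>y - x\<bar>"
    proof (intro exI[of _ d] conjI ballI impI)
      show "d > 0" by (rule d)
      fix y assume y: "y \<in> {a..b}" "\<bar>y - x\<bar> < d"
      have "\<bar>sqrt (f y + \<delta>) - sqrt (f x + \<delta>)\<bar> \<le> \<bar>f y - f x\<bar> / sqrt \<delta>" using sq nn x y by auto
      also have "\<dots> \<le> B * \<bar>y - x\<bar> / sqrt \<delta>" using d y dpos by (intro divide_right_mono) auto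
      finally show "\<bar>sqrt (f y + \<delta>) - sqrt (f x + \<delta>)\<bar> \<le> B / sqrt \<delta> * \<bar>y - x\<bar>" by simp
    qed
  qed
  moreover have "sbdd a b (\<lambda>s. sqrt (f s + \<delta>)) (sqrt (M + \<delta>))"
    unfolding sbdd_def using B(2) nn dpos by (auto simp: sbdd_def)
  ultimately show ?thesis unfolding PL_def by blast
qed

lemma coercive:
  fixes a b p lam \<kappa> :: real
  assumes "\<bar>p\<bar> \<le> a * b" "a \<ge> 0" "b \<ge> 0" "0 < \<kappa>" "\<kappa> < lam"
  shows "(1 - \<kappa> / lam) / 2 * (a^2 + lam^2 * b^2) \<le> a^2 / 2 + lam^2 * b^2 / 2 + \<kappa> * p"
proof -
  define S where "S = a^2 + lam^2 * b^2"
  define r where "r = \<kappa> / lam"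
  have aux: "(1 - r)/2 * S = S/2 - r*(S/2)" by (simp add: field_simps)
  have "0 \<le> (a - lam * b)^2" by simp
  then have amgm: "2 * lam * (a * b) \<le> S" unfolding S_def by (simp add: power2_diff power_mult_distrib algebra_simps)
  have k1: "\<kappa> * (a * b) \<le> r * (S / 2)"
  proof -
    have "\<kappa> * (a * b) = r * (lam * (a * b))" using assms by (simp add: r_def field_simps)
    also have "\<dots> \<le> r * (S / 2)"
      using amgm assms unfolding r_def by (intro mult_left_mono) auto
    finally show ?thesis .
  qed
  have k2: "- (\<kappa> * (a * b)) \<le> \<kappa> * p"
  proof -
    have "- (a * b) \<le> p" using assms(1) by linarith
    then have "\<kappa> * (- (a * b)) \<le> \<kappa> * p" using assms(4) by (intro mult_left_mono) auto
    then show ?thesis by simp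
  qed
  have "(1 - r) / 2 * S \<le> a^2 / 2 + lam^2 * b^2 / 2 + \<kappa> * p"
    using aux k1 k2 S_def by linarith
  then show ?thesis unfolding S_def r_def .
qed


lemma ip_id_one[simp]: "ip (\<lambda>m. m) (\<lambda>m. 1) = 1 / 2"
proof -
  have "ip (\<lambda>m. 2 * m - 1) (\<lambda>m. 1) = 2 * ip (\<lambda>m. m) (\<lambda>m. 1) - ip (\<lambda>m. 1) (\<lambda>m. 1)"
    by (simp add: ip_lin)
  then show ?thesis using int_Z ip_one_one by simp
qed

lemma ip_const_one[simp]: "ip (\<lambda>m. c) (\<lambda>m. 1) = c"
  using ip_cmult_left[of c "\<lambda>m. 1" "\<lambda>m. 1"] ip_one_one by simp

lemma PL_id[intro]: "PL a b (\<lambda>s. s)"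
proof -
  have "plip a b (\<lambda>s. s) 1" unfolding plip_def by (auto intro: exI[of _ 1])
  moreover have "sbdd a b (\<lambda>s. s) (\<bar>a\<bar> + \<bar>b\<bar>)" unfolding sbdd_def by auto
  ultimately show ?thesis unfolding PL_def by blast
qed

locale lsol =
  fixes lam \<kappa> :: real and \<rho>0 :: "real measure" and v0 :: "real \<Rightarrow> real"
    and X U :: "real \<Rightarrow> real \<Rightarrow> real"
  assumes kpos: "\<kappa> > 0" and lk: "\<kappa> < lam" and P2: "P2 \<rho>0"
    and v0m: "v0 \<in> borel_measurable \<rho>0" and v0i: "integrable \<rho>0 (\<lambda>x. (v0 x)^2)"
    and sol: "lagrangian_solution lam \<kappa> \<rho>0 v0 X U"
begin

definition "Ud t = (\<lambda>m. - 2 * \<kappa> * U t m + lam^2 * (2 * m - 1 + (\<integral>\<omega>. X t \<omega> \<partial>Om) - X t m))"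
definition "n t = ip (X t) (\<lambda>m. 1)"
definition "ub t = ip (U t) (\<lambda>m. 1)"
definition "m1 = (\<integral>x. x \<partial>\<rho>0)"
definition "m2 = (\<integral>x. v0 x \<partial>\<rho>0)"

lemma K: "t \<ge> 0 \<Longrightarrow> X t \<in> Kcone" using sol by (simp add: lagrangian_solution_def)
lemma XL[simp]: "t \<ge> 0 \<Longrightarrow> X t \<in> L2" using K Kcone_L2 by blast
lemma UL[simp]: "t \<ge> 0 \<Longrightarrow> U t \<in> L2" using sol by (simp add: lagrangian_solution_def)
lemma Lip: "T \<ge> 0 \<Longrightarrow> \<exists>L. \<forall>s\<in>{0..T}. \<forall>t\<in>{0..T}. nrm (\<lambda>m. X s m - X t m) \<le> L * \<bar>s - t\<bar>"
  using sol by (simp add: lagrangian_solution_def nrm_def)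
lemma X0: "AE m in Om. X 0 m = quantile \<rho>0 m" using sol by (simp add: lagrangian_solution_def)
lemma U0: "AE m in Om. U 0 m = v0 (quantile \<rho>0 m)" using sol by (simp add: lagrangian_solution_def)
lemma Uder: "t \<ge> 0 \<Longrightarrow> L2_deriv_within U (Ud t) t {0..}"
  using sol by (simp add: lagrangian_solution_def Ud_def)
lemma Xder: "AE t in lborel. t \<ge> 0 \<longrightarrow>
        (\<exists>D. L2_deriv_within X D t {0..} \<and> (\<lambda>m. U t m - D m) \<in> normal_cone (X t))"
  using sol by (simp add: lagrangian_solution_def)

lemma rd: "real_distribution \<rho>0"
  using P2 unfolding P2_def real_distribution_def real_distribution_axioms_def by auto

lemma Ud_eq: "Ud t = (\<lambda>m. - 2 * \<kappa> * U t m + lam^2 * (2 * m - 1 + n t - X t m))"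
  by (simp add: Ud_def n_def int_ip)

lemma UdL[simp]: "t \<ge> 0 \<Longrightarrow> Ud t \<in> L2" unfolding Ud_eq by auto

lemma n0: "n 0 = m1"
proof -
  have q: "quantile \<rho>0 \<in> borel_measurable Om" by (rule mono_meas_Om[OF quantile_mono[OF rd]])
  have "n 0 = (\<integral>m. X 0 m \<partial>Om)" by (simp add: n_def int_ip)
  also have "\<dots> = (\<integral>m. quantile \<rho>0 m \<partial>Om)"
    using X0 q XL[of 0] by (intro integral_cong_AE) (auto simp: L2_def)
  also have "\<dots> = (\<integral>x. x \<partial>distr Om borel (quantile \<rho>0))"
    using q by (subst integral_distr) auto
  also have "\<dots> = m1" by (simp add: distr_quantile[OF rd] m1_def)
  finally show ?thesis .
qed

lemma ub0: "ub 0 = m2"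
proof -
  have q: "quantile \<rho>0 \<in> borel_measurable Om" by (rule mono_meas_Om[OF quantile_mono[OF rd]])
  have v: "v0 \<in> borel_measurable borel"
    using v0m rd by (simp add: real_distribution.events_eq_borel cong: measurable_cong_sets)
  have "ub 0 = (\<integral>m. U 0 m \<partial>Om)" by (simp add: ub_def int_ip)
  also have "\<dots> = (\<integral>m. v0 (quantile \<rho>0 m) \<partial>Om)"
    using U0 q v UL[of 0] by (intro integral_cong_AE) (auto simp: L2_def)
  also have "\<dots> = (\<integral>x. v0 x \<partial>distr Om borel (quantile \<rho>0))"
    using q v by (subst integral_distr) auto
  also have "\<dots> = m2" by (simp add: distr_quantile[OF rd] m2_def)
  finally show ?thesis .
qed

lemma ub_deriv: "t \<ge> 0 \<Longrightarrow> (ub has_real_derivative (- 2 * \<kappa> * ub t)) (at t within {0..})"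
proof -
  assume t: "t \<ge> 0"
  have "((\<lambda>s. ip (U s) (\<lambda>m. 1)) has_real_derivative (ip (Ud t) (\<lambda>m. 1) + ip (U t) (\<lambda>m. 0))) (at t within {0..})"
    by (rule ip_deriv[OF Uder[OF t] const_deriv]) (use t in auto)
  moreover have "ip (Ud t) (\<lambda>m. 1) + ip (U t) (\<lambda>m. 0) = - 2 * \<kappa> * ub t"
    unfolding Ud_eq using t by (simp add: ip_lin ub_def n_def)
  ultimately show ?thesis unfolding ub_def[abs_def] by simp
qed

lemma ub_eq: "t \<ge> 0 \<Longrightarrow> ub t = m2 * exp (- 2 * \<kappa> * t)"
proof -
  assume t: "t \<ge> 0"
  have "\<exists>c. \<forall>x\<in>{0..}. ub x * exp (2 * \<kappa> * x) = c"
  proof (rule has_field_derivative_zero_constant)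
    show "convex {0::real..}" by simp
    fix x :: real assume x: "x \<in> {0..}"
    have "((\<lambda>x. ub x * exp (2 * \<kappa> * x)) has_real_derivative
        (- 2 * \<kappa> * ub x) * exp (2 * \<kappa> * x) + (exp (2 * \<kappa> * x) * (2 * \<kappa>)) * ub x) (at x within {0..})"
      by (rule DERIV_mult[OF ub_deriv]) (use x in \<open>auto intro!: derivative_eq_intros\<close>)
    then show "((\<lambda>x. ub x * exp (2 * \<kappa> * x)) has_real_derivative 0) (at x within {0..})"
      by (simp add: algebra_simps)
  qed
  then obtain c where c: "\<And>x. x \<ge> 0 \<Longrightarrow> ub x * exp (2 * \<kappa> * x) = c" by auto
  have "c = m2" using c[of 0] ub0 by simp
  then have "ub t * exp (2 * \<kappa> * t) = m2" using c t by simp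
  then have "ub t = m2 / exp (2 * \<kappa> * t)" by (simp add: field_simps)
  moreover have "exp (- 2 * \<kappa> * t) = inverse (exp (2 * \<kappa> * t))" by (subst exp_minus[symmetric]) simp
  ultimately show ?thesis by (simp add: divide_inverse)
qed

lemma nrm_const: "nrm (\<lambda>m. c) = \<bar>c\<bar>"
  using nrm_cmult[of c "\<lambda>m. 1"] nrm_one by simp

lemma nrm_minus_le: "f \<in> L2 \<Longrightarrow> g \<in> L2 \<Longrightarrow> nrm (\<lambda>m. f m - g m) \<le> nrm f + nrm g"
  using nrm_triangle[of f "\<lambda>m. - g m"] nrm_cmult[of "-1" g] by simp

lemma n_bound: "t \<ge> 0 \<Longrightarrow> \<bar>n t\<bar> \<le> nrm (X t)"
  using cauchy_schwarz[of "X t" "\<lambda>m. 1"] by (simp add: n_def nrm_one)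

lemma Ud_bound: "t \<ge> 0 \<Longrightarrow> nrm (Ud t) \<le> 2 * \<kappa> * nrm (U t) + lam^2 * (nrm (\<lambda>m. 2 * m - 1) + 2 * nrm (X t))"
proof -
  assume t: "t \<ge> 0"
  have "nrm (Ud t) \<le> nrm (\<lambda>m. - 2 * \<kappa> * U t m) + nrm (\<lambda>m. lam^2 * (2 * m - 1 + n t - X t m))"
    unfolding Ud_eq by (rule nrm_triangle) (use t in auto)
  also have "nrm (\<lambda>m. - 2 * \<kappa> * U t m) = 2 * \<kappa> * nrm (U t)"
    using nrm_cmult[of "- 2 * \<kappa>" "U t"] kpos by simp
  also have "nrm (\<lambda>m. lam^2 * (2 * m - 1 + n t - X t m)) = lam^2 * nrm (\<lambda>m. 2 * m - 1 + n t - X t m)"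
    using nrm_cmult[of "lam^2" "\<lambda>m. 2 * m - 1 + n t - X t m"] by simp
  also have "nrm (\<lambda>m. 2 * m - 1 + n t - X t m) \<le> nrm (\<lambda>m. 2 * m - 1) + 2 * nrm (X t)"
  proof -
    have "nrm (\<lambda>m. 2 * m - 1 + n t - X t m) \<le> nrm (\<lambda>m. 2 * m - 1 + n t) + nrm (X t)"
      by (rule nrm_minus_le) (use t in auto)
    moreover have "nrm (\<lambda>m. 2 * m - 1 + n t) \<le> nrm (\<lambda>m. 2 * m - 1) + nrm (\<lambda>m. n t)"
      by (rule nrm_triangle) auto
    ultimately show ?thesis using n_bound[OF t] nrm_const[of "n t"] by simp
  qed
  finally show ?thesis by (simp add: mult_left_mono)
qed

lemma CPL_X: "0 \<le> a \<Longrightarrow> CPL a b X"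
proof -
  assume a: "0 \<le> a"
  show ?thesis
  proof (cases "a \<le> b")
    case False
    then have e: "{a..b} = {}" by simp
    have "cplip a b X 0" unfolding cplip_def e by simp
    moreover have "cbdd a b X 0" unfolding cbdd_def e by simp
    ultimately show ?thesis unfolding CPL_def by blast
  next
    case True
    then have b: "b \<ge> 0" using a by simp
    obtain L where L: "\<forall>s\<in>{0..b}. \<forall>t\<in>{0..b}. nrm (\<lambda>m. X s m - X t m) \<le> L * \<bar>s - t\<bar>"
      using Lip[OF b] by blast
    have "cplip a b X L" unfolding cplip_def
    proof (intro ballI exI[of _ 1] conjI impI)
      fix x y assume "x \<in> {a..b}" "y \<in> {a..b}"
      then show "nrm (\<lambda>m. X y m - X x m) \<le> L * \<bar>y - x\<bar>" by (intro L[rule_format]) (use a in auto)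
    qed simp
    moreover have "cbdd a b X (nrm (X 0) + \<bar>L\<bar> * b)" unfolding cbdd_def
    proof
      fix s assume s: "s \<in> {a..b}"
      have "nrm (X s) \<le> nrm (\<lambda>m. X s m - X 0 m) + nrm (X 0)" using s a by (intro nrm_diff_le) auto
      also have "nrm (\<lambda>m. X s m - X 0 m) \<le> L * \<bar>s - 0\<bar>" by (rule L[rule_format]) (use s a b in auto)
      also have "L * \<bar>s - 0\<bar> \<le> \<bar>L\<bar> * b"
      proof -
        have "L * \<bar>s - 0\<bar> \<le> \<bar>L\<bar> * \<bar>s - 0\<bar>" by (rule mult_right_mono) auto
        also have "\<dots> \<le> \<bar>L\<bar> * b" using s a by (intro mult_left_mono) auto
        finally show ?thesis .
      qed
      finally show "X s \<in> L2 \<and> nrm (X s) \<le> nrm (X 0) + \<bar>L\<bar> * b" using s a by simp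
    qed
    ultimately show ?thesis unfolding CPL_def by blast
  qed
qed

lemma CPL_U: "0 \<le> a \<Longrightarrow> CPL a b U"
proof -
  assume a: "0 \<le> a"
  have sub: "{a..b} \<subseteq> {0..}" using a by auto
  have cU: "continuous_on {a..b} (\<lambda>s. nrm (U s))"
    by (rule nrm_cont_deriv[OF sub, of U Ud]) (use Uder UL a in auto)
  obtain MU where MU: "\<And>s. s \<in> {a..b} \<Longrightarrow> \<bar>nrm (U s)\<bar> \<le> MU"
    using cont_bounded[OF cU] by blast
  obtain LX MX where MX: "cbdd a b X MX" using CPL_X[OF a] unfolding CPL_def by blast
  define K where "K = 2 * \<kappa> * MU + lam^2 * (nrm (\<lambda>m. 2 * m - 1) + 2 * MX)"
  have Kb: "nrm (Ud s) \<le> K" if s: "s \<in> {a..b}" for s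
  proof -
    have s0: "s \<ge> 0" using s a by auto
    have "nrm (Ud s) \<le> 2 * \<kappa> * nrm (U s) + lam^2 * (nrm (\<lambda>m. 2 * m - 1) + 2 * nrm (X s))"
      by (rule Ud_bound[OF s0])
    also have "\<dots> \<le> K" unfolding K_def
    proof (intro add_mono mult_left_mono order.refl)
      show "nrm (U s) \<le> MU" using MU[OF s] by simp
      show "nrm (X s) \<le> MX" using MX s by (auto simp: cbdd_def)
    qed (use kpos in auto)
    finally show ?thesis .
  qed
  have "cplip a b U (K + 1)"
    by (rule CPL_deriv[OF sub]) (use Uder UL Kb a in auto)
  moreover have "cbdd a b U MU" unfolding cbdd_def
  proof
    fix s assume s: "s \<in> {a..b}"
    then show "U s \<in> L2 \<and> nrm (U s) \<le> MU" using MU[OF s] a by auto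
  qed
  ultimately show ?thesis unfolding CPL_def by blast
qed

definition "good t \<longleftrightarrow> (\<exists>D. L2_deriv_within X D t {0..} \<and> (\<lambda>m. U t m - D m) \<in> normal_cone (X t))"

lemma goodN: "\<exists>N. negligible N \<and> (\<forall>t. t \<ge> 0 \<longrightarrow> t \<notin> N \<longrightarrow> good t)"
proof -
  have "\<exists>N\<in>null_sets lborel. {t \<in> space lborel. \<not> (t \<ge> 0 \<longrightarrow> good t)} \<subseteq> N"
    using Xder unfolding eventually_ae_filter good_def by simp
  then obtain N where N: "{t \<in> space lborel. \<not> (t \<ge> 0 \<longrightarrow> good t)} \<subseteq> N" "N \<in> null_sets lborel"
    by blast
  have "negligible N" unfolding negligible_iff_null_sets using N(2) by (rule null_sets_completionI)
  then show ?thesis using N(1) by auto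
qed

lemma good_facts:
  assumes t: "t > 0" and g: "good t"
  obtains D W where "L2_deriv_within X D t {0..}" "W \<in> normal_cone (X t)" "D = (\<lambda>m. U t m - W m)"
    "ip W D = 0" "ip W (X t) = 0" "ip W (\<lambda>m. 1) = 0" "ip W (\<lambda>m. 2 * m - 1) \<le> 0" "W \<in> L2" "D \<in> L2"
proof -
  obtain D where D: "L2_deriv_within X D t {0..}" "(\<lambda>m. U t m - D m) \<in> normal_cone (X t)"
    using g unfolding good_def by blast
  define W where "W = (\<lambda>m. U t m - D m)"
  have W: "W \<in> normal_cone (X t)" using D(2) by (simp add: W_def)
  have eq: "D = (\<lambda>m. U t m - W m)" by (simp add: W_def)
  have "ip W D = 0" by (rule tangent[OF t D(1) K W])
  moreover have "ip W (X t) = 0" "ip W (\<lambda>m. 1) = 0" "ip W (\<lambda>m. 2 * m - 1) \<le> 0"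
    using nc_props[OF K W] t by auto
  moreover have "W \<in> L2" using W by (rule nc_L2)
  moreover have "D \<in> L2" using D(1) by (rule L2_deriv_D)
  ultimately show ?thesis using that D(1) W eq by blast
qed

lemma n_deriv_good:
  assumes t: "t > 0" and g: "good t"
  shows "(n has_real_derivative ub t) (at t within {0..})"
proof -
  obtain D W where DW: "L2_deriv_within X D t {0..}" "W \<in> normal_cone (X t)" "D = (\<lambda>m. U t m - W m)"
    "ip W (\<lambda>m. 1) = 0" "W \<in> L2"
    by (rule good_facts[OF t g]) blast
  have "((\<lambda>s. ip (X s) (\<lambda>m. 1)) has_real_derivative (ip D (\<lambda>m. 1) + ip (X t) (\<lambda>m. 0))) (at t within {0..})"
    by (rule ip_deriv[OF DW(1) const_deriv]) (use t in auto)
  moreover have "ip D (\<lambda>m. 1) + ip (X t) (\<lambda>m. 0) = ub t"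
    using DW t by (simp add: ip_lin ub_def)
  ultimately show ?thesis unfolding n_def[abs_def] by simp
qed

lemma PL_n[intro]: "0 \<le> a \<Longrightarrow> PL a b n"
  unfolding n_def[abs_def] by (intro PL_ip CPL_X CPL_const) auto

lemma PL_ub[intro]: "0 \<le> a \<Longrightarrow> PL a b ub"
  unfolding ub_def[abs_def] by (intro PL_ip CPL_U CPL_const) auto

lemma n_eq: "t \<ge> 0 \<Longrightarrow> n t = m1 + (m2 / (2 * \<kappa>)) * (1 - exp (- 2 * \<kappa> * t))"
proof -
  assume t: "t \<ge> 0"
  obtain N where N: "negligible N" "\<And>t. t \<ge> 0 \<Longrightarrow> t \<notin> N \<Longrightarrow> good t" using goodN by blast
  define f where "f s = n s - (m1 + (m2 / (2 * \<kappa>)) * (1 - exp (- 2 * \<kappa> * s)))" for s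
  have "f t = f 0"
  proof (rule eq_from_deriv[OF t _ N(1)])
    show "PL 0 t f" unfolding f_def by (intro PL_diff PL_add PL_cmult PL_const PL_exp PL_n) auto
    fix s assume s: "s \<in> {0<..<t}" "s \<notin> N"
    have gs: "good s" using N(2) s by auto
    have dn: "(n has_real_derivative ub s) (at s within {0..t})"
      by (rule DERIV_subset[OF n_deriv_good[OF _ gs]]) (use s in auto)
    have de: "((\<lambda>s. exp (- 2 * \<kappa> * s)) has_real_derivative exp (- 2 * \<kappa> * s) * (- 2 * \<kappa>)) (at s within {0..t})"
      by (auto intro!: derivative_eq_intros)
    have "((\<lambda>s. m1 + (m2 / (2 * \<kappa>)) * (1 - exp (- 2 * \<kappa> * s))) has_real_derivative
        (0 + (m2 / (2 * \<kappa>)) * (0 - exp (- 2 * \<kappa> * s) * (- 2 * \<kappa>)))) (at s within {0..t})"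
      by (intro DERIV_add DERIV_cmult DERIV_diff DERIV_const de)
    from DERIV_diff[OF dn this]
    have "(f has_real_derivative (ub s - (0 + (m2 / (2 * \<kappa>)) * (0 - exp (- 2 * \<kappa> * s) * (- 2 * \<kappa>))))) (at s within {0..t})"
      unfolding f_def[abs_def] .
    moreover have "ub s - (0 + (m2 / (2 * \<kappa>)) * (0 - exp (- 2 * \<kappa> * s) * (- 2 * \<kappa>))) = 0"
      using ub_eq[of s] s kpos by simp
    ultimately show "(f has_real_derivative 0) (at s within {0..t})" by simp
  qed
  moreover have "f 0 = 0" by (simp add: f_def n0)
  ultimately show ?thesis by (simp add: f_def)
qed

end

lemma key_alg:
  fixes \<kappa> lam :: real
  assumes L: "f \<in> L2" "g \<in> L2" "W \<in> L2"
  shows "(1/2) * (ip (\<lambda>m. -2*\<kappa>*f m - lam^2 * g m) f + ip f (\<lambda>m. -2*\<kappa>*f m - lam^2 * g m))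
    + (lam^2/2) * (ip (\<lambda>m. f m - W m) g + ip g (\<lambda>m. f m - W m))
    + \<kappa> * (ip (\<lambda>m. f m - W m) f + ip g (\<lambda>m. -2*\<kappa>*f m - lam^2 * g m))
    + 2 * \<kappa> * ((1/2) * ip f f + (lam^2/2) * ip g g + \<kappa> * ip g f)
    = - (lam^2 * ip W g) - \<kappa> * ip W f"
proof -
  have s1: "ip f g = ip g f" "ip g W = ip W g" "ip f W = ip W f" by (simp_all add: ip_sym)
  show ?thesis using L by (simp add: ip_lin s1) (simp add: field_simps)
qed

context lsol
begin

definition "uu t = (\<lambda>m. U t m - ub t)"
definition "xx t = (\<lambda>m. X t m - (2 * m - 1) - n t)"
definition "F t = (1/2) * ip (uu t) (uu t) + (lam^2/2) * ip (xx t) (xx t) + \<kappa> * ip (xx t) (uu t)"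

lemma uuL[simp]: "t \<ge> 0 \<Longrightarrow> uu t \<in> L2" by (simp add: uu_def)
lemma xxL[simp]: "t \<ge> 0 \<Longrightarrow> xx t \<in> L2" by (simp add: xx_def)

lemma CPL_uu: "0 \<le> a \<Longrightarrow> CPL a b uu"
proof -
  assume a: "0 \<le> a"
  have "CPL a b (\<lambda>s m. U s m - (\<lambda>m. 0) m - ub s)" by (rule CPL_sub[OF CPL_U[OF a] _ PL_ub[OF a]]) simp
  moreover have "(\<lambda>s m. U s m - (\<lambda>m. 0) m - ub s) = uu" by (simp add: uu_def[abs_def])
  ultimately show ?thesis by simp
qed

lemma CPL_xx: "0 \<le> a \<Longrightarrow> CPL a b xx"
proof -
  assume a: "0 \<le> a"
  have "CPL a b (\<lambda>s m. X s m - (\<lambda>m. 2 * m - 1) m - n s)" by (rule CPL_sub[OF CPL_X[OF a] _ PL_n[OF a]]) simp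
  moreover have "(\<lambda>s m. X s m - (\<lambda>m. 2 * m - 1) m - n s) = xx" by (simp add: xx_def[abs_def])
  ultimately show ?thesis by simp
qed

lemma PL_F: "0 \<le> a \<Longrightarrow> PL a b F"
  unfolding F_def[abs_def] by (intro PL_add PL_cmult PL_ip CPL_uu CPL_xx)

lemma PL_G: "0 \<le> a \<Longrightarrow> PL a b (\<lambda>s. exp (2 * \<kappa> * s) * F s)"
  by (intro PL_mult PL_exp PL_F)

lemma uu_deriv: "t \<ge> 0 \<Longrightarrow> L2_deriv_within uu (\<lambda>m. -2*\<kappa>*uu t m - lam^2 * xx t m) t {0..}"
proof -
  assume t: "t \<ge> 0"
  have "L2_deriv_within (\<lambda>s m. U s m - (\<lambda>m. 0) m - ub s) (\<lambda>m. Ud t m - (- 2 * \<kappa> * ub t)) t {0..}"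
    by (rule L2_deriv_sub[OF Uder[OF t] _ ub_deriv[OF t]]) (use t in auto)
  moreover have "(\<lambda>s m. U s m - (\<lambda>m. 0) m - ub s) = uu" by (simp add: uu_def[abs_def])
  moreover have "(\<lambda>m. Ud t m - (- 2 * \<kappa> * ub t)) = (\<lambda>m. -2*\<kappa>*uu t m - lam^2 * xx t m)"
    by (rule ext) (simp add: Ud_eq uu_def xx_def algebra_simps)
  ultimately show ?thesis by simp
qed

lemma xx_deriv_good:
  assumes t: "t > 0" and g: "good t" and D: "L2_deriv_within X D t {0..}" and DW: "D = (\<lambda>m. U t m - W m)"
  shows "L2_deriv_within xx (\<lambda>m. uu t m - W m) t {0..}"
proof -
  have "L2_deriv_within (\<lambda>s m. X s m - (\<lambda>m. 2 * m - 1) m - n s) (\<lambda>m. D m - ub t) t {0..}"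
    by (rule L2_deriv_sub[OF D _ n_deriv_good[OF t g]]) (use t in auto)
  moreover have "(\<lambda>s m. X s m - (\<lambda>m. 2 * m - 1) m - n s) = xx" by (simp add: xx_def[abs_def])
  moreover have "(\<lambda>m. D m - ub t) = (\<lambda>m. uu t m - W m)"
    by (rule ext) (simp add: DW uu_def)
  ultimately show ?thesis by simp
qed

lemma F_deriv_ineq:
  assumes t: "t > 0" and g: "good t"
  shows "\<exists>F'. (F has_real_derivative F') (at t within {0..}) \<and> F' + 2 * \<kappa> * F t \<le> 0"
proof -
  obtain D W where DW: "L2_deriv_within X D t {0..}" "W \<in> normal_cone (X t)" "D = (\<lambda>m. U t m - W m)"
    "ip W D = 0" "ip W (X t) = 0" "ip W (\<lambda>m. 1) = 0" "ip W (\<lambda>m. 2 * m - 1) \<le> 0" "W \<in> L2" "D \<in> L2"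
    by (rule good_facts[OF t g])
  let ?u' = "\<lambda>m. -2*\<kappa>*uu t m - lam^2 * xx t m"
  let ?x' = "\<lambda>m. uu t m - W m"
  have du: "L2_deriv_within uu ?u' t {0..}" using uu_deriv t by simp
  have dx: "L2_deriv_within xx ?x' t {0..}" by (rule xx_deriv_good[OF t g DW(1) DW(3)])
  have Ls: "\<And>s. s \<in> {0..} \<Longrightarrow> uu s \<in> L2" "uu t \<in> L2" "\<And>s. s \<in> {0..} \<Longrightarrow> xx s \<in> L2" "xx t \<in> L2"
    using t by auto
  have d1: "((\<lambda>s. ip (uu s) (uu s)) has_real_derivative (ip ?u' (uu t) + ip (uu t) ?u')) (at t within {0..})"
    by (rule ip_deriv[OF du du Ls(1,2) Ls(1,2)])
  have d2: "((\<lambda>s. ip (xx s) (xx s)) has_real_derivative (ip ?x' (xx t) + ip (xx t) ?x')) (at t within {0..})"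
    by (rule ip_deriv[OF dx dx Ls(3,4) Ls(3,4)])
  have d3: "((\<lambda>s. ip (xx s) (uu s)) has_real_derivative (ip ?x' (uu t) + ip (xx t) ?u')) (at t within {0..})"
    by (rule ip_deriv[OF dx du Ls(3,4) Ls(1,2)])
  define F' where "F' = (1/2) * (ip ?u' (uu t) + ip (uu t) ?u') + (lam^2/2) * (ip ?x' (xx t) + ip (xx t) ?x')
      + \<kappa> * (ip ?x' (uu t) + ip (xx t) ?u')"
  have dF: "(F has_real_derivative F') (at t within {0..})"
    unfolding F_def[abs_def] F'_def by (intro DERIV_add DERIV_cmult d1 d2 d3)
  have eq: "F' + 2 * \<kappa> * F t = - (lam^2 * ip W (xx t)) - \<kappa> * ip W (uu t)"
    unfolding F'_def F_def by (rule key_alg) (use t DW in auto)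
  have wx: "ip W (xx t) = - ip W (\<lambda>m. 2 * m - 1)"
    using DW t ip_cmult_right[of W "n t" "\<lambda>m. 1"] by (simp add: xx_def ip_lin)
  have wu: "ip W (uu t) = ip W W"
  proof -
    have "ip W (uu t) = ip W (U t)" using DW t ip_cmult_right[of W "ub t" "\<lambda>m. 1"] by (simp add: uu_def ip_lin)
    moreover have "ip W D = ip W (U t) - ip W W" using DW t by (simp add: ip_lin)
    ultimately show ?thesis using DW(4) by simp
  qed
  have "F' + 2 * \<kappa> * F t \<le> 0"
  proof -
    have "lam^2 * ip W (\<lambda>m. 2 * m - 1) \<le> 0" using DW(7) by (simp add: mult_nonneg_nonpos)
    moreover have "\<kappa> * ip W W \<ge> 0" using kpos ip_self_nonneg[of W] by simp
    ultimately show ?thesis unfolding eq wx wu by simp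
  qed
  then show ?thesis using dF by blast
qed

lemma F_decay: "T \<ge> 0 \<Longrightarrow> F T \<le> F 0 * exp (- 2 * \<kappa> * T)"
proof -
  assume T: "T \<ge> 0"
  obtain N where N: "negligible N" "\<And>t. t \<ge> 0 \<Longrightarrow> t \<notin> N \<Longrightarrow> good t" using goodN by blast
  obtain B where B: "plip 0 T (\<lambda>s. exp (2 * \<kappa> * s) * F s) B" using PL_G[of 0 T] unfolding PL_def by auto
  have "exp (2 * \<kappa> * T) * F T \<le> exp (2 * \<kappa> * 0) * F 0"
  proof (rule mono_ae[OF T B N(1)])
    fix s assume s: "s \<in> {0<..<T}" "s \<notin> N"
    have gs: "good s" using N(2) s by auto
    obtain F' where F': "(F has_real_derivative F') (at s within {0..})" "F' + 2 * \<kappa> * F s \<le> 0"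
      using F_deriv_ineq[OF _ gs] s by auto
    have de: "((\<lambda>s. exp (2 * \<kappa> * s)) has_real_derivative exp (2 * \<kappa> * s) * (2 * \<kappa>)) (at s within {0..})"
      by (auto intro!: derivative_eq_intros)
    have "((\<lambda>s. exp (2 * \<kappa> * s) * F s) has_real_derivative
        (exp (2 * \<kappa> * s) * (2 * \<kappa>)) * F s + F' * exp (2 * \<kappa> * s)) (at s within {0..})"
      by (rule DERIV_mult[OF de F'(1)])
    then have "((\<lambda>s. exp (2 * \<kappa> * s) * F s) has_real_derivative
        (exp (2 * \<kappa> * s) * (2 * \<kappa>)) * F s + F' * exp (2 * \<kappa> * s)) (at s within {0..T})"
      by (rule DERIV_subset) auto
    moreover have "(exp (2 * \<kappa> * s) * (2 * \<kappa>)) * F s + F' * exp (2 * \<kappa> * s) \<le> 0"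
    proof -
      have "(exp (2 * \<kappa> * s) * (2 * \<kappa>)) * F s + F' * exp (2 * \<kappa> * s) = exp (2 * \<kappa> * s) * (F' + 2 * \<kappa> * F s)"
        by (simp add: algebra_simps)
      also have "\<dots> \<le> 0" using F'(2) by (simp add: mult_nonneg_nonpos)
      finally show ?thesis .
    qed
    ultimately show "\<exists>f'. ((\<lambda>s. exp (2 * \<kappa> * s) * F s) has_real_derivative f') (at s within {0..T}) \<and> f' \<le> 0"
      by blast
  qed
  then have "exp (2 * \<kappa> * T) * F T \<le> F 0" by simp
  then have "F T \<le> F 0 / exp (2 * \<kappa> * T)" by (simp add: field_simps)
  moreover have "exp (- 2 * \<kappa> * T) = inverse (exp (2 * \<kappa> * T))" by (subst exp_minus[symmetric]) simp
  ultimately show ?thesis by (simp add: divide_inverse)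
qed

end


lemma sq_le_imp: "a \<ge> 0 \<Longrightarrow> K \<ge> 0 \<Longrightarrow> e \<ge> 0 \<Longrightarrow> a^2 \<le> K * e^2 \<Longrightarrow> a \<le> sqrt K * e" for a K e :: real
proof -
  assume h: "a \<ge> 0" "K \<ge> 0" "e \<ge> 0" "a^2 \<le> K * e^2"
  have "(sqrt K * e)^2 = K * e^2" using h by (simp add: power_mult_distrib)
  then have "a^2 \<le> (sqrt K * e)^2" using h by simp
  then show ?thesis by (rule power2_le_imp_le) (use h in simp)
qed

lemma le_sqrt_eps: "(\<And>\<delta>. \<delta> > 0 \<Longrightarrow> x \<le> sqrt \<delta> + y) \<Longrightarrow> x \<le> y" for x y :: real
proof (rule ccontr)
  assume h: "\<And>\<delta>. \<delta> > 0 \<Longrightarrow> x \<le> sqrt \<delta> + y" and "\<not> x \<le> y"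
  then have p: "x - y > 0" by simp
  have "x \<le> sqrt (((x - y) / 2)^2) + y" by (rule h) (use p in simp)
  also have "sqrt (((x - y) / 2)^2) = (x - y) / 2" using p by simp
  finally have "x \<le> (x - y) / 2 + y" .
  then show False using p by (simp add: field_simps)
qed

context lsol
begin

definition "c0 = (1 - \<kappa> / lam) / 2"
definition "K1 = F 0 / c0"
definition "A1 = sqrt K1 + \<bar>m2\<bar>"

lemma lam_pos: "lam > 0" using kpos lk by simp
lemma c0_pos: "c0 > 0" using kpos lk lam_pos by (simp add: c0_def field_simps)

lemma F_lower: "t \<ge> 0 \<Longrightarrow> c0 * ((nrm (uu t))^2 + lam^2 * (nrm (xx t))^2) \<le> F t"
proof -
  assume t: "t \<ge> 0"
  have cs: "\<bar>ip (xx t) (uu t)\<bar> \<le> nrm (uu t) * nrm (xx t)"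
    using cauchy_schwarz[of "xx t" "uu t"] t by (simp add: mult.commute)
  have "c0 * ((nrm (uu t))^2 + lam^2 * (nrm (xx t))^2)
      \<le> (nrm (uu t))^2 / 2 + lam^2 * (nrm (xx t))^2 / 2 + \<kappa> * ip (xx t) (uu t)"
    unfolding c0_def by (rule coercive[OF cs nrm_nonneg nrm_nonneg kpos lk])
  also have "\<dots> = F t" by (simp add: F_def nrm_sq)
  finally show ?thesis .
qed

lemma F0_nonneg: "F 0 \<ge> 0"
proof -
  have "0 \<le> c0 * ((nrm (uu 0))^2 + lam^2 * (nrm (xx 0))^2)" using c0_pos by simp
  then show ?thesis using F_lower[of 0] by simp
qed

lemma K1_nonneg: "K1 \<ge> 0" using F0_nonneg c0_pos by (simp add: K1_def)

lemma exp_sq: "(exp (- \<kappa> * t))^2 = exp (- 2 * \<kappa> * t)"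
  by (simp add: power2_eq_square exp_add[symmetric])

lemma sq_bounds:
  assumes t: "t \<ge> 0"
  shows "(nrm (uu t))^2 + lam^2 * (nrm (xx t))^2 \<le> K1 * (exp (- \<kappa> * t))^2"
proof -
  have "c0 * ((nrm (uu t))^2 + lam^2 * (nrm (xx t))^2) \<le> F 0 * exp (- 2 * \<kappa> * t)"
    using F_lower[OF t] F_decay[OF t] by simp
  then have "(nrm (uu t))^2 + lam^2 * (nrm (xx t))^2 \<le> F 0 * exp (- 2 * \<kappa> * t) / c0"
    using c0_pos by (simp add: field_simps)
  moreover have "K1 * (exp (- \<kappa> * t))^2 = F 0 * exp (- 2 * \<kappa> * t) / c0"
    unfolding exp_sq K1_def by simp
  ultimately show ?thesis by simp
qed

lemma uu_bound: "t \<ge> 0 \<Longrightarrow> nrm (uu t) \<le> sqrt K1 * exp (- \<kappa> * t)"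
proof -
  assume t: "t \<ge> 0"
  have "(nrm (uu t))^2 \<le> K1 * (exp (- \<kappa> * t))^2" using sq_bounds[OF t]
    by (smt (verit) zero_le_power2 mult_nonneg_nonneg)
  then show ?thesis by (intro sq_le_imp nrm_nonneg K1_nonneg) auto
qed

lemma xx_bound: "t \<ge> 0 \<Longrightarrow> nrm (xx t) \<le> sqrt (K1 / lam^2) * exp (- \<kappa> * t)"
proof -
  assume t: "t \<ge> 0"
  have "lam^2 * (nrm (xx t))^2 \<le> K1 * (exp (- \<kappa> * t))^2" using sq_bounds[OF t]
    by (smt (verit) zero_le_power2)
  then have "(nrm (xx t))^2 \<le> K1 / lam^2 * (exp (- \<kappa> * t))^2" using lam_pos by (simp add: field_simps)
  then show ?thesis using K1_nonneg by (intro sq_le_imp nrm_nonneg) auto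
qed

lemma U_bound: "t \<ge> 0 \<Longrightarrow> nrm (U t) \<le> A1 * exp (- \<kappa> * t)"
proof -
  assume t: "t \<ge> 0"
  have "U t = (\<lambda>m. uu t m + ub t)" by (simp add: uu_def)
  then have "nrm (U t) \<le> nrm (uu t) + nrm (\<lambda>m. ub t)"
    using nrm_triangle[of "uu t" "\<lambda>m. ub t"] t by simp
  also have "nrm (\<lambda>m. ub t) = \<bar>m2\<bar> * exp (- 2 * \<kappa> * t)" using ub_eq[OF t] by (simp add: nrm_const abs_mult)
  also have "\<bar>m2\<bar> * exp (- 2 * \<kappa> * t) \<le> \<bar>m2\<bar> * exp (- \<kappa> * t)"
    using t kpos by (intro mult_left_mono) (auto simp: mult_nonneg_nonneg)
  finally show ?thesis using uu_bound[OF t] by (simp add: A1_def distrib_right)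
qed

lemma D_bound:
  assumes t: "t > 0" and g: "good t" and D: "L2_deriv_within X D t {0..}"
  shows "nrm D \<le> A1 * exp (- \<kappa> * t)"
proof -
  obtain D' W where DW: "L2_deriv_within X D' t {0..}" "W \<in> normal_cone (X t)" "D' = (\<lambda>m. U t m - W m)"
    "ip W D' = 0" "ip W (X t) = 0" "ip W (\<lambda>m. 1) = 0" "ip W (\<lambda>m. 2 * m - 1) \<le> 0" "W \<in> L2" "D' \<in> L2"
    by (rule good_facts[OF t g])
  have DD: "nrm (\<lambda>m. D m - D' m) = 0"
  proof -
    have "((\<lambda>s. nrm (\<lambda>m. D m - D' m)) \<longlongrightarrow> 0) (at t within {0..})"
    proof (rule Lim_null_comparison)
      show "\<forall>\<^sub>F s in at t within {0..}. norm (nrm (\<lambda>m. D m - D' m)) \<le>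
          nrm (\<lambda>m. (X s m - X t m) / (s - t) - D m) + nrm (\<lambda>m. (X s m - X t m) / (s - t) - D' m)"
        unfolding eventually_at_filter
      proof (rule always_eventually, intro allI impI)
        fix s assume s: "s \<noteq> t" "s \<in> {0..}"
        have L: "(\<lambda>m. (X s m - X t m) / (s - t)) \<in> L2" "D \<in> L2" "D' \<in> L2"
          using s t DW L2_deriv_D[OF D] by auto
        have "nrm (\<lambda>m. D m - D' m) \<le> nrm (\<lambda>m. D m - (X s m - X t m) / (s - t)) + nrm (\<lambda>m. (X s m - X t m) / (s - t) - D' m)"
          using nrm_triangle[of "\<lambda>m. D m - (X s m - X t m) / (s - t)" "\<lambda>m. (X s m - X t m) / (s - t) - D' m"] L by simp
        then show "norm (nrm (\<lambda>m. D m - D' m)) \<le>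
          nrm (\<lambda>m. (X s m - X t m) / (s - t) - D m) + nrm (\<lambda>m. (X s m - X t m) / (s - t) - D' m)"
          by (simp add: nrm_nonneg nrm_diff_sym[of D])
      qed
      have "((\<lambda>s. nrm (\<lambda>m. (X s m - X t m) / (s - t) - D m) + nrm (\<lambda>m. (X s m - X t m) / (s - t) - D' m)) \<longlongrightarrow> 0 + 0) (at t within {0..})"
        by (intro tendsto_intros L2_deriv_lim[OF D] L2_deriv_lim[OF DW(1)])
      then show "((\<lambda>s. nrm (\<lambda>m. (X s m - X t m) / (s - t) - D m) + nrm (\<lambda>m. (X s m - X t m) / (s - t) - D' m)) \<longlongrightarrow> 0) (at t within {0..})"
        by simp
    qed
    moreover have "at t within {0::real..} \<noteq> bot"
    proof
      assume b: "at t within {0::real..} = bot"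
      have "at_right t \<le> at t within {0::real..}" by (rule at_le) (use t in auto)
      then have "at_right t = (bot :: real filter)" using b by (simp add: bot.extremum_unique)
      then show False by simp
    qed
    ultimately show ?thesis using tendsto_const_iff by blast
  qed
  have "nrm D \<le> nrm (\<lambda>m. D m - D' m) + nrm D'"
    by (rule nrm_diff_le) (use L2_deriv_D[OF D] DW in auto)
  then have 1: "nrm D \<le> nrm D'" using DD by simp
  have "(nrm (U t))^2 = ip D' D' + ip W W"
  proof -
    have "U t = (\<lambda>m. D' m + W m)" using DW(3) by auto
    then have "ip (U t) (U t) = ip (\<lambda>m. D' m + W m) (\<lambda>m. D' m + W m)" by simp
    also have "\<dots> = ip D' D' + 2 * ip W D' + ip W W"
      using DW(8,9) by (simp add: ip_lin ip_sym[of D' W])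
    finally have "ip (U t) (U t) = ip D' D' + 2 * ip W D' + ip W W" .
    then show ?thesis using DW(4) by (simp add: nrm_sq)
  qed
  then have "(nrm D')^2 \<le> (nrm (U t))^2" using ip_self_nonneg[of W] by (simp add: nrm_sq)
  then have "nrm D' \<le> nrm (U t)" by (rule power2_le_imp_le) (rule nrm_nonneg)
  then show ?thesis using 1 U_bound[of t] t by simp
qed

end


context lsol
begin

lemma Xdiff:
  assumes t: "0 \<le> t" and ts: "t < s"
  shows "nrm (\<lambda>m. X s m - X t m) \<le> A1 * exp (- \<kappa> * t) * (s - t)"
proof -
  define c where "c = A1 * exp (- \<kappa> * t)"
  define Y where "Y r = (\<lambda>m. X r m - X t m)" for r
  have YL: "r \<ge> 0 \<Longrightarrow> Y r \<in> L2" for r using t by (simp add: Y_def)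
  have CY: "CPL t s Y"
  proof -
    have "CPL t s (\<lambda>r m. X r m - X t m - (\<lambda>s. 0) r)" by (rule CPL_sub[OF CPL_X[OF t]]) (use t in auto)
    then show ?thesis by (simp add: Y_def[abs_def])
  qed
  define \<psi> where "\<psi> r = ip (Y r) (Y r)" for r
  have PLpsi: "PL t s \<psi>" unfolding \<psi>_def[abs_def] by (rule PL_ip[OF CY CY])
  have psi_nn: "\<psi> r \<ge> 0" for r by (simp add: \<psi>_def ip_self_nonneg)
  have psi_t: "\<psi> t = 0" by (simp add: \<psi>_def Y_def)
  have nY: "nrm (Y r) = sqrt (\<psi> r)" for r by (simp add: \<psi>_def nrm_def2)
  obtain N where N: "negligible N" "\<And>t. t \<ge> 0 \<Longrightarrow> t \<notin> N \<Longrightarrow> good t" using goodN by blast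
  have main: "sqrt (\<psi> s + \<delta>) - c * (s - t) \<le> sqrt (\<psi> t + \<delta>) - c * (t - t)" if dpos: "\<delta> > 0" for \<delta>
  proof -
    define \<phi> where "\<phi> r = sqrt (\<psi> r + \<delta>) - c * (r - t)" for r
    have PLphi: "PL t s \<phi>" unfolding \<phi>_def[abs_def]
      by (intro PL_diff PL_cmult PL_id PL_const PL_sqrt[OF PLpsi psi_nn dpos])
    obtain B where B: "plip t s \<phi> B" using PLphi unfolding PL_def by blast
    have "\<phi> s \<le> \<phi> t"
    proof (rule mono_ae[OF _ B N(1)])
      show "t \<le> s" using ts by simp
      fix r assume r: "r \<in> {t<..<s}" "r \<notin> N"
      have r0: "r > 0" using r t by auto
      have gr: "good r" using N(2) r r0 by auto
      obtain D W where DW: "L2_deriv_within X D r {0..}" "W \<in> normal_cone (X r)" "D = (\<lambda>m. U r m - W m)"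
        "ip W D = 0" "ip W (X r) = 0" "ip W (\<lambda>m. 1) = 0" "ip W (\<lambda>m. 2 * m - 1) \<le> 0" "W \<in> L2" "D \<in> L2"
        by (rule good_facts[OF r0 gr])
      have dY: "L2_deriv_within Y D r {0..}"
      proof -
        have "L2_deriv_within (\<lambda>s m. X s m - X t m - 0) (\<lambda>m. D m - 0) r {0..}"
          by (rule L2_deriv_sub[OF DW(1), where g="\<lambda>s. 0"]) (use t r0 in auto)
        then show ?thesis by (simp add: Y_def[abs_def])
      qed
      have dpsi: "(\<psi> has_real_derivative (ip D (Y r) + ip (Y r) D)) (at r within {0..})"
        unfolding \<psi>_def[abs_def] by (rule ip_deriv[OF dY dY]) (use YL r0 in auto)
      have dpsi2: "((\<lambda>r. \<psi> r + \<delta>) has_real_derivative (ip D (Y r) + ip (Y r) D + 0)) (at r within {t..s})"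
        by (rule DERIV_add[OF DERIV_subset[OF dpsi] DERIV_const]) (use t in auto)
      have pos: "\<psi> r + \<delta> > 0" using psi_nn[of r] dpos by simp
      have dsq: "((\<lambda>r. sqrt (\<psi> r + \<delta>)) has_real_derivative
          (inverse (sqrt (\<psi> r + \<delta>)) / 2 * (ip D (Y r) + ip (Y r) D + 0))) (at r within {t..s})"
        by (rule DERIV_chain2[OF DERIV_real_sqrt[OF pos] dpsi2])
      have dlin: "((\<lambda>r. c * (r - t)) has_real_derivative c * (1 - 0)) (at r within {t..s})"
        by (intro DERIV_cmult DERIV_diff DERIV_ident DERIV_const)
      have dphi: "(\<phi> has_real_derivative (inverse (sqrt (\<psi> r + \<delta>)) / 2 * (ip D (Y r) + ip (Y r) D + 0) - c * (1 - 0))) (at r within {t..s})"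
        unfolding \<phi>_def[abs_def] by (rule DERIV_diff[OF dsq dlin])
      have "inverse (sqrt (\<psi> r + \<delta>)) / 2 * (ip D (Y r) + ip (Y r) D + 0) - c * (1 - 0) \<le> 0"
      proof -
        define S where "S = sqrt (\<psi> r + \<delta>)"
        have Spos: "S > 0" using pos by (simp add: S_def)
        have p: "ip D (Y r) \<le> nrm D * nrm (Y r)"
          using cauchy_schwarz[of D "Y r"] DW(9) YL[of r] r0 by simp
        have nYS: "nrm (Y r) \<le> S" unfolding nY S_def by (simp add: dpos less_imp_le)
        have "nrm D * nrm (Y r) \<le> nrm D * S" by (rule mult_left_mono[OF nYS nrm_nonneg])
        then have pS: "ip D (Y r) \<le> nrm D * S" using p by simp
        have eq: "inverse S / 2 * (ip D (Y r) + ip (Y r) D + 0) = ip D (Y r) / S"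
          by (simp add: ip_sym[of "Y r" D] field_simps)
        have "ip D (Y r) / S \<le> nrm D" using pS Spos by (simp add: field_simps)
        also have "nrm D \<le> A1 * exp (- \<kappa> * r)" by (rule D_bound[OF r0 gr DW(1)])
        also have "A1 * exp (- \<kappa> * r) \<le> c"
        proof -
          have "A1 \<ge> 0" unfolding A1_def using K1_nonneg by simp
          moreover have "exp (- \<kappa> * r) \<le> exp (- \<kappa> * t)" using r kpos by (simp add: mult_left_mono)
          ultimately show ?thesis unfolding c_def by (intro mult_left_mono) auto
        qed
        finally show ?thesis unfolding S_def[symmetric] eq by simp
      qed
      then show "\<exists>f'. (\<phi> has_real_derivative f') (at r within {t..s}) \<and> f' \<le> 0" using dphi by blast
    qed
    then show ?thesis by (simp add: \<phi>_def)
  qed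
  have "nrm (Y s) \<le> c * (s - t)"
  proof (rule le_sqrt_eps)
    fix \<delta> :: real assume d: "\<delta> > 0"
    have "nrm (Y s) \<le> sqrt (\<psi> s + \<delta>)" unfolding nY using d by simp
    also have "\<dots> \<le> sqrt \<delta> + c * (s - t)" using main[OF d] psi_t by simp
    finally show "nrm (Y s) \<le> sqrt \<delta> + c * (s - t)" .
  qed
  then show ?thesis by (simp add: Y_def c_def)
qed

lemma V_bound:
  assumes t: "t \<ge> 0" and V: "L2_deriv_within X V t {t..}"
  shows "nrm V \<le> A1 * exp (- \<kappa> * t)"
proof -
  define c where "c = A1 * exp (- \<kappa> * t)"
  have VL: "V \<in> L2" using V by (rule L2_deriv_D)
  have "nrm V \<le> 0 + c"
  proof (rule tendsto_lowerbound)
    show "((\<lambda>s. nrm (\<lambda>m. (X s m - X t m) / (s - t) - V m) + c) \<longlongrightarrow> 0 + c) (at t within {t..})"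
      by (intro tendsto_intros L2_deriv_lim[OF V])
    show "\<forall>\<^sub>F s in at t within {t..}. nrm V \<le> nrm (\<lambda>m. (X s m - X t m) / (s - t) - V m) + c"
      unfolding eventually_at_filter
    proof (rule always_eventually, intro allI impI)
      fix s assume s: "s \<noteq> t" "s \<in> {t..}"
      then have ts: "t < s" by simp
      have QL: "(\<lambda>m. (X s m - X t m) / (s - t)) \<in> L2" using t ts by simp
      have "nrm V \<le> nrm (\<lambda>m. V m - (X s m - X t m) / (s - t)) + nrm (\<lambda>m. (X s m - X t m) / (s - t))"
        by (rule nrm_diff_le[OF VL QL])
      also have "nrm (\<lambda>m. V m - (X s m - X t m) / (s - t)) = nrm (\<lambda>m. (X s m - X t m) / (s - t) - V m)"
        by (rule nrm_diff_sym)
      also have "nrm (\<lambda>m. (X s m - X t m) / (s - t)) \<le> c"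
      proof -
        have "nrm (\<lambda>m. X s m - X t m) = \<bar>s - t\<bar> * nrm (\<lambda>m. (X s m - X t m) / (s - t))"
          by (rule quot_nrm) (use ts in simp)
        moreover have "nrm (\<lambda>m. X s m - X t m) \<le> c * (s - t)" unfolding c_def by (rule Xdiff[OF t ts])
        ultimately show ?thesis using ts by (simp add: mult.commute)
      qed
      finally show "nrm V \<le> nrm (\<lambda>m. (X s m - X t m) / (s - t) - V m) + c" by simp
    qed
    show "at t within {t..} \<noteq> bot" by (simp add: at_within_Ici_at_right)
  qed
  then show ?thesis by (simp add: c_def)
qed

end


lemma sqrt_sum_sq_le: "a \<ge> 0 \<Longrightarrow> b \<ge> 0 \<Longrightarrow> sqrt (a^2 + b^2) \<le> a + b" for a b :: real
  by (rule real_le_lsqrt) (auto simp: power2_sum)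

context lsol
begin

lemma final:
  fixes V v :: "real \<Rightarrow> real \<Rightarrow> real"
  assumes Vd: "\<And>t. t \<ge> 0 \<Longrightarrow> L2_deriv_within X (V t) t {t..}"
    and vV: "\<And>t. t \<ge> 0 \<Longrightarrow> AE m in Om. v t (X t m) = V t m"
  shows "\<exists>C. \<forall>t\<ge>0. dT2 (distr Om borel (X t)) (v t)
      (density lborel (\<lambda>x. ennreal (indicator {((\<integral>x. x \<partial>\<rho>0) + (1 / (2 * \<kappa>)) * (\<integral>x. v0 x \<partial>\<rho>0)) - 1<..<((\<integral>x. x \<partial>\<rho>0) + (1 / (2 * \<kappa>)) * (\<integral>x. v0 x \<partial>\<rho>0)) + 1} x / 2)))
      (\<lambda>_. 0) \<le> C * exp (- \<kappa> * t)"
proof -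
  define xb where "xb = (\<integral>x. x \<partial>\<rho>0) + (1 / (2 * \<kappa>)) * (\<integral>x. v0 x \<partial>\<rho>0)"
  have xb: "xb = m1 + (1 / (2 * \<kappa>)) * m2" by (simp add: xb_def m1_def m2_def)
  define C where "C = sqrt (K1 / lam^2) + \<bar>m2\<bar> / (2 * \<kappa>) + A1"
  have "dT2 (distr Om borel (X t)) (v t)
      (density lborel (\<lambda>x. ennreal (indicator {xb - 1<..<xb + 1} x / 2))) (\<lambda>_. 0) \<le> C * exp (- \<kappa> * t)"
    if t: "t \<ge> 0" for t
  proof -
    let ?\<rho> = "distr Om borel (X t)"
    let ?q = "quantile ?\<rho>"
    let ?\<rho>i = "density lborel (\<lambda>x. ennreal (indicator {xb - 1<..<xb + 1} x / 2))"
    let ?qi = "quantile ?\<rho>i"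
    have Xm: "X t \<in> borel_measurable Om" using XL[OF t] by (rule L2_meas)
    have Xmono: "mono_on {0<..<1} (X t)" using K[OF t] by (rule Kcone_mono)
    have AEin: "AE m in Om. m \<in> {0<..<1}" by (rule AE_I2) simp
    have AEq: "AE m in Om. ?q m = X t m"
      using AE_isCont_mono[OF Xmono] AEin
      by eventually_elim (rule quantile_distr_mono[OF Xm Xmono])
    have qi: "\<And>m. m \<in> {0<..<1} \<Longrightarrow> ?qi m = xb - 1 + 2 * m" by (rule rinf_quantile)
    have VL: "V t \<in> L2" using Vd[OF t] by (rule L2_deriv_D)
    have f1L: "(\<lambda>m. X t m - (xb - 1 + 2 * m)) \<in> L2" using t by simp
    have "nrm (\<lambda>m. ?q m - ?qi m) \<le> nrm (\<lambda>m. X t m - (xb - 1 + 2 * m))"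
      by (rule nrm_AE_le[OF f1L]) (use AEq AEin in \<open>eventually_elim, simp add: qi\<close>)
    also have "(\<lambda>m. X t m - (xb - 1 + 2 * m)) = (\<lambda>m. xx t m + (n t - xb))"
      by (rule ext) (simp add: xx_def)
    also have "nrm (\<lambda>m. xx t m + (n t - xb)) \<le> nrm (xx t) + nrm (\<lambda>m. n t - xb)"
      by (rule nrm_triangle) (use t in auto)
    also have "nrm (\<lambda>m. n t - xb) = \<bar>m2\<bar> / (2 * \<kappa>) * exp (- 2 * \<kappa> * t)"
    proof -
      define a where "a = m2 / (2 * \<kappa>)"
      have xa: "xb = m1 + a" by (simp add: xb a_def)
      have na: "n t = m1 + a * (1 - exp (- 2 * \<kappa> * t))" using n_eq[OF t] by (simp add: a_def)
      have "n t - xb = - a * exp (- 2 * \<kappa> * t)" unfolding na xa by (simp add: algebra_simps)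
      then have "n t - xb = - (m2 / (2 * \<kappa>)) * exp (- 2 * \<kappa> * t)" by (simp add: a_def)
      then show ?thesis using kpos by (simp add: nrm_const abs_mult)
    qed
    finally have T1: "nrm (\<lambda>m. ?q m - ?qi m) \<le> nrm (xx t) + \<bar>m2\<bar> / (2 * \<kappa>) * exp (- 2 * \<kappa> * t)" .
    have T1': "nrm (\<lambda>m. ?q m - ?qi m) \<le> (sqrt (K1 / lam^2) + \<bar>m2\<bar> / (2 * \<kappa>)) * exp (- \<kappa> * t)"
    proof -
      have "\<bar>m2\<bar> / (2 * \<kappa>) * exp (- 2 * \<kappa> * t) \<le> \<bar>m2\<bar> / (2 * \<kappa>) * exp (- \<kappa> * t)"
        using t kpos by (intro mult_left_mono) (auto simp: mult_nonneg_nonneg)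
      then show ?thesis using T1 xx_bound[OF t] by (simp add: distrib_right)
    qed
    have "nrm (\<lambda>m. v t (?q m) - 0) \<le> nrm (V t)"
      by (rule nrm_AE_le[OF VL]) (use AEq vV[OF t] in \<open>eventually_elim, simp\<close>)
    also have "\<dots> \<le> A1 * exp (- \<kappa> * t)" by (rule V_bound[OF t Vd[OF t]])
    finally have T2: "nrm (\<lambda>m. v t (?q m) - 0) \<le> A1 * exp (- \<kappa> * t)" .
    have "dT2 ?\<rho> (v t) ?\<rho>i (\<lambda>_. 0) = sqrt ((nrm (\<lambda>m. ?q m - ?qi m))^2 + (nrm (\<lambda>m. v t (?q m) - 0))^2)"
      by (simp add: dT2_def nrm_def)
    also have "\<dots> \<le> nrm (\<lambda>m. ?q m - ?qi m) + nrm (\<lambda>m. v t (?q m) - 0)"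
      by (rule sqrt_sum_sq_le) (auto simp: nrm_nonneg)
    also have "\<dots> \<le> C * exp (- \<kappa> * t)" using T1' T2 by (simp add: C_def distrib_right)
    finally show ?thesis .
  qed
  then show ?thesis unfolding xb_def by blast
qed

end

theorem theorem7p3:
  shows "\<exists>c>0. \<forall>(lam::real) (\<kappa>::real) (\<rho>0::real measure) (v0::real \<Rightarrow> real)
      (X::real \<Rightarrow> real \<Rightarrow> real) (U::real \<Rightarrow> real \<Rightarrow> real)
      (V::real \<Rightarrow> real \<Rightarrow> real) (v::real \<Rightarrow> real \<Rightarrow> real).
    \<kappa> > 0 \<and> lam > \<kappa> \<and> P2 \<rho>0 \<and> v0 \<in> borel_measurable \<rho>0 \<and> integrable \<rho>0 (\<lambda>x. (v0 x)^2) \<and>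
    lagrangian_solution lam \<kappa> \<rho>0 v0 X U \<and>
    (\<forall>t\<ge>0. L2_deriv_within X (V t) t {t..}) \<and>
    (\<forall>t\<ge>0. AE m in Om. v t (X t m) = V t m)
    \<longrightarrow>
    (let xbar = (\<integral>x. x \<partial>\<rho>0) + (1 / (2 * \<kappa>)) * (\<integral>x. v0 x \<partial>\<rho>0);
         \<rho>inf = density lborel (\<lambda>x. ennreal (indicator {xbar - 1<..<xbar + 1} x / 2))
     in \<exists>C. \<forall>t\<ge>0.
          dT2 (distr Om borel (X t)) (v t) \<rho>inf (\<lambda>_. 0) \<le> C * exp (- c * (2 * \<kappa>) * t))"
proof (intro exI[of _ "1/2"] conjI allI impI)
  show "(1/2::real) > 0" by simp
  fix lam \<kappa> :: real and \<rho>0 :: "real measure" and v0 :: "real \<Rightarrow> real"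
    and X U V v :: "real \<Rightarrow> real \<Rightarrow> real"
  assume H: "\<kappa> > 0 \<and> lam > \<kappa> \<and> P2 \<rho>0 \<and> v0 \<in> borel_measurable \<rho>0 \<and> integrable \<rho>0 (\<lambda>x. (v0 x)^2) \<and>
    lagrangian_solution lam \<kappa> \<rho>0 v0 X U \<and>
    (\<forall>t\<ge>0. L2_deriv_within X (V t) t {t..}) \<and>
    (\<forall>t\<ge>0. AE m in Om. v t (X t m) = V t m)"
  interpret lsol lam \<kappa> \<rho>0 v0 X U using H by unfold_locales auto
  have "\<exists>C. \<forall>t\<ge>0. dT2 (distr Om borel (X t)) (v t)
      (density lborel (\<lambda>x. ennreal (indicator {((\<integral>x. x \<partial>\<rho>0) + (1 / (2 * \<kappa>)) * (\<integral>x. v0 x \<partial>\<rho>0)) - 1<..<((\<integral>x. x \<partial>\<rho>0) + (1 / (2 * \<kappa>)) * (\<integral>x. v0 x \<partial>\<rho>0)) + 1} x / 2)))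
      (\<lambda>_. 0) \<le> C * exp (- \<kappa> * t)"
    by (rule final[of V v]) (use H in auto)
  moreover have "\<And>t. exp (- (1/2) * (2 * \<kappa>) * t) = exp (- \<kappa> * t)" by simp
  ultimately show "let xbar = (\<integral>x. x \<partial>\<rho>0) + (1 / (2 * \<kappa>)) * (\<integral>x. v0 x \<partial>\<rho>0);
         \<rho>inf = density lborel (\<lambda>x. ennreal (indicator {xbar - 1<..<xbar + 1} x / 2))
     in \<exists>C. \<forall>t\<ge>0.
          dT2 (distr Om borel (X t)) (v t) \<rho>inf (\<lambda>_. 0) \<le> C * exp (- (1/2) * (2 * \<kappa>) * t)"
    unfolding Let_def by simp
qed


end
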